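(* For any constant $c > 0$, consider RLS-GP with $F = \{\mathrm{AND}, \mathrm{OR}\}$, $L = \{x_1, \ldots, x_n\}$, a tree size limit $\ell \ge n$, using in each iteration a fresh training set of $s = n^c \lg^2 n$ inputs sampled uniformly at random from $\{0,1\}^n$ to evaluate solution quality, and terminating (returning its current solution) when the sampled error of its current solution is at most $c' \lg n$, where $c'$ is an appropriately large constant. For the target $\mathrm{AND}_n$, and likewise for the target $\mathrm{OR}_n$, with probability at least $1 - O(\log^2(n)/n)$ the algorithm terminates within $O(\log n)$ iterations and returns a solution with generalisation error at most $n^{-c}$.
   Context: Programs are finite rooted binary trees (the empty tree is allowed) whose internal nodes are labelled by binary Boolean functions from $F$ and whose leaves are labelled by literals from $L$; a program computes a Boolean function of $(x_1,\dots,x_n)$ in the obvious way. $\mathrm{AND}_n(x) = x_1 \wedge \dots \wedge x_n$, $\mathrm{OR}_n(x) = x_1 \vee \dots \vee x_n$; $h$ denotes the target. The generalisation error of $X$ is $|\{x \in \{0,1\}^n : X(x) \ne h(x)\}|/2^n$. In each iteration a fresh training set of $s$ inputs is drawn independently and uniformly at random from $\{0,1\}^n$; the sampled error $f(X)$ of a program $X$ in that iteration is the number of sampled inputs on which $X$ differs from $h$; parent and offspring are evaluated on the same training set. LeafCount$(X)$ is the number of leaves. HVL-Prime with subtree deletion, applied to a tree $X$: choose $op \in \{\mathrm{INS}, \mathrm{DEL}, \mathrm{SUB}\}$, a literal $l \in L$ and a function $g \in F$, independently and uniformly at random. If $X$ is empty, the result is the single leaf $l$. Otherwise: if $op = \mathrm{INS}$,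 choose a node $x$ of $X$ uniformly at random and replace it by a new node labelled $g$ whose two children are the subtree rooted at $x$ and a new leaf $l$, in uniformly random order; if $op = \mathrm{DEL}$, choose a node $x$ of $X$ (leaf or internal) uniformly at random and replace the parent of $x$ by the sibling of $x$; if $op = \mathrm{SUB}$, choose a leaf of $X$ uniformly at random and replace it by $l$. RLS-GP with tree size limit $\ell$: start with the empty tree $X$; in each iteration let $X' := $ HVL-Prime$(X)$, and if LeafCount$(X') \le \ell$ and $f(X') \le f(X)$ (sampled errors on the current training set) then set $X := X'$. $\lg$ is the base-2 logarithm; asymptotics are as $n \to \infty$. *)

theory Defs
  imports "HOL-Probability.Probability"
begin

text \<open>Programs: non-empty trees; the possibly empty program is a gp option
  (None = the empty tree). Internal nodes carry True = AND, False = OR.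
  Leaves carry a variable index i < n, standing for the literal x_(i+1).
  Inputs are bool lists of length n.\<close>

datatype gp = Lf nat | Nd bool gp gp

fun evalgp :: "gp \<Rightarrow> bool list \<Rightarrow> bool" where
  "evalgp (Lf i) x = x ! i"
| "evalgp (Nd g l r) x = (if g then evalgp l x \<and> evalgp r x else evalgp l x \<or> evalgp r x)"

text \<open>Convention: the empty program disagrees with the target on every input.\<close>
definition agrees :: "(bool list \<Rightarrow> bool) \<Rightarrow> gp option \<Rightarrow> bool list \<Rightarrow> bool" where
  "agrees h X x = (case X of None \<Rightarrow> False | Some t \<Rightarrow> evalgp t x = h x)"

fun leaves :: "gp \<Rightarrow> nat" where
  "leaves (Lf i) = 1"
| "leaves (Nd g l r) = leaves l + leaves r"

definition leafcount :: "gp option \<Rightarrow> nat" where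
  "leafcount X = (case X of None \<Rightarrow> 0 | Some t \<Rightarrow> leaves t)"

definition ANDn :: "nat \<Rightarrow> bool list \<Rightarrow> bool" where
  "ANDn n x = (\<forall>i<n. x ! i)"

definition ORn :: "nat \<Rightarrow> bool list \<Rightarrow> bool" where
  "ORn n x = (\<exists>i<n. x ! i)"

definition inputs :: "nat \<Rightarrow> bool list set" where
  "inputs n = {x. length x = n}"

definition generr :: "nat \<Rightarrow> (bool list \<Rightarrow> bool) \<Rightarrow> gp option \<Rightarrow> real" where
  "generr n h X = real (card {x \<in> inputs n. \<not> agrees h X x}) / 2 ^ n"

definition serr :: "(bool list \<Rightarrow> bool) \<Rightarrow> gp option \<Rightarrow> bool list list \<Rightarrow> nat" where
  "serr h X S = length (filter (\<lambda>x. \<not> agrees h X x) S)"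

fun samples :: "nat \<Rightarrow> nat \<Rightarrow> bool list list pmf" where
  "samples n 0 = return_pmf []"
| "samples n (Suc k) = do { x \<leftarrow> pmf_of_set (inputs n); xs \<leftarrow> samples n k; return_pmf (x # xs) }"

text \<open>Node positions as paths (False = left child, True = right child).\<close>
fun positions :: "gp \<Rightarrow> bool list set" where
  "positions (Lf i) = {[]}"
| "positions (Nd g l r) = insert [] (Cons False ` positions l \<union> Cons True ` positions r)"

fun leafpos :: "gp \<Rightarrow> bool list set" where
  "leafpos (Lf i) = {[]}"
| "leafpos (Nd g l r) = Cons False ` leafpos l \<union> Cons True ` leafpos r"

fun subt :: "gp \<Rightarrow> bool list \<Rightarrow> gp" where
  "subt t [] = t"
| "subt (Lf i) (_ # _) = Lf i"
| "subt (Nd g l r) (b # p) = (if b then subt r p else subt l p)"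

fun repl :: "gp \<Rightarrow> bool list \<Rightarrow> gp \<Rightarrow> gp" where
  "repl t [] u = u"
| "repl (Lf i) (_ # _) u = Lf i"
| "repl (Nd g l r) (b # p) u = (if b then Nd g l (repl r p u) else Nd g (repl l p u) r)"

datatype mop = INS | DEL | SUB

text \<open>Deleting node x replaces its parent by its sibling; deleting the root
  yields the empty tree.\<close>
definition del_at :: "gp \<Rightarrow> bool list \<Rightarrow> gp option" where
  "del_at t p = (if p = [] then None
     else Some (repl t (butlast p) (subt t (butlast p @ [\<not> last p]))))"

definition hvl :: "nat \<Rightarrow> gp option \<Rightarrow> gp option pmf" where
  "hvl n X = do {
     op \<leftarrow> pmf_of_set {INS, DEL, SUB};
     l \<leftarrow> pmf_of_set {0..<n};
     g \<leftarrow> pmf_of_set {True, False};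
     (case X of
        None \<Rightarrow> return_pmf (Some (Lf l))
      | Some t \<Rightarrow> (case op of
          INS \<Rightarrow> do { p \<leftarrow> pmf_of_set (positions t); b \<leftarrow> pmf_of_set {True, False};
                     return_pmf (Some (repl t p (if b then Nd g (subt t p) (Lf l) else Nd g (Lf l) (subt t p)))) }
        | DEL \<Rightarrow> do { p \<leftarrow> pmf_of_set (positions t); return_pmf (del_at t p) }
        | SUB \<Rightarrow> do { p \<leftarrow> pmf_of_set (leafpos t); return_pmf (Some (repl t p (Lf l))) }))
   }"

text \<open>State: (current program, terminated).\<close>
definition rls_step :: "nat \<Rightarrow> nat \<Rightarrow> nat \<Rightarrow> (bool list \<Rightarrow> bool) \<Rightarrow> real
    \<Rightarrow> gp option \<times> bool \<Rightarrow> (gp option \<times> bool) pmf" where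
  "rls_step n s ell h thr st = (case st of (X, d) \<Rightarrow>
     if d then return_pmf (X, True)
     else do {
       S \<leftarrow> samples n s;
       if real (serr h X S) \<le> thr then return_pmf (X, True)
       else do {
         X' \<leftarrow> hvl n X;
         return_pmf (if leafcount X' \<le> ell \<and> serr h X' S \<le> serr h X S then X' else X, False) } })"

fun rls_run :: "nat \<Rightarrow> nat \<Rightarrow> nat \<Rightarrow> (bool list \<Rightarrow> bool) \<Rightarrow> real \<Rightarrow> nat \<Rightarrow> (gp option \<times> bool) pmf" where
  "rls_run n s ell h thr 0 = return_pmf (None, False)"
| "rls_run n s ell h thr (Suc T) = bind_pmf (rls_run n s ell h thr T) (rls_step n s ell h thr)"

definition ssize :: "real \<Rightarrow> nat \<Rightarrow> nat" where
  "ssize c n = nat \<lceil>real n powr c * (log 2 (real n))\<^sup>2\<rceil>"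

end

theory Submission
  imports Defs "HOL-Library.Multiset"
begin


fun lvs :: "gp \<Rightarrow> nat list" where
  "lvs (Lf i) = [i]"
| "lvs (Nd g l r) = lvs l @ lvs r"

fun gates :: "gp \<Rightarrow> bool set" where
  "gates (Lf i) = {}"
| "gates (Nd g l r) = insert g (gates l \<union> gates r)"

lemma leaves_lvs: "leaves t = length (lvs t)"
  by (induction t) auto

lemma lvs_ne: "lvs t \<noteq> []"
  by (induction t) auto

lemma positions_finite: "finite (positions t)"
  by (induction t) auto

lemma leafpos_finite: "finite (leafpos t)"
  by (induction t) auto

lemma positions_ne: "[] \<in> positions t"
  by (cases t) auto

lemma leafpos_ne: "leafpos t \<noteq> {}"
  by (induction t) auto

lemma leafpos_sub: "p \<in> leafpos t \<Longrightarrow> p \<in> positions t"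
  by (induction t arbitrary: p) auto

lemma leafpos_Lf: "p \<in> leafpos t \<Longrightarrow> \<exists>j. subt t p = Lf j"
  by (induction t arbitrary: p) auto

lemma eval_allb:
  assumes "gates t \<subseteq> {b}"
  shows "(evalgp t x = b) \<longleftrightarrow> (\<forall>i\<in>set (lvs t). x ! i = b)"
  using assms by (induction t) auto

lemma eval_Nd_b: "(evalgp (Nd b l r) x = b) \<longleftrightarrow> (evalgp l x = b \<and> evalgp r x = b)"
  by (cases b) auto

lemma eval_Nd_nb: "(evalgp (Nd (\<not>b) l r) x = b) \<longleftrightarrow> (evalgp l x = b \<or> evalgp r x = b)"
  by (cases b) auto

definition ctxp :: "gp \<Rightarrow> bool list \<Rightarrow> nat list \<Rightarrow> bool" where
 "ctxp t p os \<longleftrightarrow> mset (lvs t) = mset os + mset (lvs (subt t p))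
     \<and> (\<forall>w. mset (lvs (repl t p w)) = mset os + mset (lvs w))
     \<and> (\<forall>w. gates (repl t p w) \<subseteq> gates t \<union> gates w)
     \<and> gates (subt t p) \<subseteq> gates t
     \<and> (\<forall>b. gates t \<subseteq> {b} \<longrightarrow> (\<forall>w x. (evalgp (repl t p w) x = b) \<longleftrightarrow>
            (evalgp w x = b \<and> (\<forall>i\<in>set os. x ! i = b))))"

lemma ctx:
  assumes "p \<in> positions t"
  shows "\<exists>os. ctxp t p os"
  using assms
proof (induction t arbitrary: p)
  case (Lf i)
  then show ?case by (intro exI[of _ "[]"]) (auto simp: ctxp_def)
next
  case (Nd g l r)
  show ?case
  proof (cases p)
    case Nil
    then show ?thesis by (intro exI[of _ "[]"]) (auto simp: ctxp_def)
  next
    case (Cons c q)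
    show ?thesis
    proof (cases c)
      case True
      with Nd.prems Cons have q: "q \<in> positions r" by auto
      from Nd.IH(2)[OF q] obtain os where os: "ctxp r q os" by blast
      have "ctxp (Nd g l r) p (lvs l @ os)"
        unfolding ctxp_def
      proof (intro conjI allI impI)
        fix b w x assume gb: "gates (Nd g l r) \<subseteq> {b}"
        hence gg: "g = b" "gates l \<subseteq> {b}" "gates r \<subseteq> {b}" by auto
        have "(evalgp (repl r q w) x = b) \<longleftrightarrow> (evalgp w x = b \<and> (\<forall>i\<in>set os. x ! i = b))"
          using os gg(3) unfolding ctxp_def by blast
        then show "(evalgp (repl (Nd g l r) p w) x = b) =
           (evalgp w x = b \<and> (\<forall>i\<in>set (lvs l @ os). x ! i = b))"
        proof -
          have el: "(evalgp l x = b) \<longleftrightarrow> (\<forall>i\<in>set (lvs l). x ! i = b)" by (rule eval_allb[OF gg(2)])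
          have "repl (Nd g l r) p w = Nd b l (repl r q w)" using True Cons gg by simp
          then show ?thesis using el \<open>(evalgp (repl r q w) x = b) \<longleftrightarrow> _\<close>
            unfolding eval_Nd_b by auto
        qed
      qed (use os True Cons in \<open>auto simp: ctxp_def ac_simps\<close>)
      then show ?thesis by blast
    next
      case False
      with Nd.prems Cons have q: "q \<in> positions l" by auto
      from Nd.IH(1)[OF q] obtain os where os: "ctxp l q os" by blast
      have "ctxp (Nd g l r) p (os @ lvs r)"
        unfolding ctxp_def
      proof (intro conjI allI impI)
        fix b w x assume gb: "gates (Nd g l r) \<subseteq> {b}"
        hence gg: "g = b" "gates l \<subseteq> {b}" "gates r \<subseteq> {b}" by auto
        have "(evalgp (repl l q w) x = b) \<longleftrightarrow> (evalgp w x = b \<and> (\<forall>i\<in>set os. x ! i = b))"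
          using os gg(2) unfolding ctxp_def by blast
        then show "(evalgp (repl (Nd g l r) p w) x = b) =
           (evalgp w x = b \<and> (\<forall>i\<in>set (os @ lvs r). x ! i = b))"
        proof -
          have el: "(evalgp r x = b) \<longleftrightarrow> (\<forall>i\<in>set (lvs r). x ! i = b)" by (rule eval_allb[OF gg(3)])
          have "repl (Nd g l r) p w = Nd b (repl l q w) r" using False Cons gg by simp
          then show ?thesis using el \<open>(evalgp (repl l q w) x = b) \<longleftrightarrow> _\<close>
            unfolding eval_Nd_b by auto
        qed
      qed (use os False Cons in \<open>auto simp: ctxp_def ac_simps\<close>)
      then show ?thesis by blast
    qed
  qed
qed


definition invt :: "bool \<Rightarrow> nat \<Rightarrow> gp \<Rightarrow> bool" where
  "invt b n t \<longleftrightarrow> gates t \<subseteq> {b} \<and> distinct (lvs t) \<and> set (lvs t) \<subseteq> {..<n}"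

definition tgt :: "bool \<Rightarrow> nat \<Rightarrow> (bool list \<Rightarrow> bool) \<Rightarrow> bool" where
  "tgt b n h \<longleftrightarrow> (\<forall>x. (h x = b) \<longleftrightarrow> (\<forall>i<n. x ! i = b))"

definition upc :: "bool \<Rightarrow> nat \<Rightarrow> (bool list \<Rightarrow> bool) \<Rightarrow> gp \<Rightarrow> gp option \<Rightarrow> bool" where
  "upc b n h t X' \<longleftrightarrow> (\<exists>t'. X' = Some t' \<and> invt b n t' \<and> length (lvs t') = Suc (length (lvs t))
      \<and> (\<forall>x. \<not> agrees h X' x \<longrightarrow> \<not> agrees h (Some t) x))"

definition neutc :: "bool \<Rightarrow> nat \<Rightarrow> gp \<Rightarrow> gp option \<Rightarrow> bool" where
  "neutc b n t X' \<longleftrightarrow> (\<exists>t'. X' = Some t' \<and> invt b n t' \<and> length (lvs t') = length (lvs t))"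

definition badc :: "nat \<Rightarrow> (bool list \<Rightarrow> bool) \<Rightarrow> gp \<Rightarrow> gp option \<Rightarrow> bool" where
  "badc n h t X' \<longleftrightarrow> (\<forall>x. \<not> agrees h (Some t) x \<longrightarrow> \<not> agrees h X' x)
     \<and> (\<exists>W f. W \<subseteq> {..<n} \<and> card W \<le> Suc (length (lvs t))
          \<and> (\<forall>x. (\<forall>i\<in>W. x ! i = f i) \<longrightarrow> agrees h (Some t) x \<and> \<not> agrees h X' x))"

lemma err_sub:
  assumes "invt b n t" "tgt b n h" "\<not> agrees h (Some t) x"
  shows "evalgp t x = b \<and> h x \<noteq> b"
proof -
  have "h x = b \<Longrightarrow> evalgp t x = b"
    using assms(1,2) eval_allb[of t b x] unfolding invt_def tgt_def by blast
  then show ?thesis using assms(3) unfolding agrees_def by auto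
qed

lemma ctxpD:
  assumes "ctxp t p os"
  shows "mset (lvs t) = mset os + mset (lvs (subt t p))"
    "mset (lvs (repl t p w)) = mset os + mset (lvs w)"
    "gates (repl t p w) \<subseteq> gates t \<union> gates w"
    "gates (subt t p) \<subseteq> gates t"
    "gates t \<subseteq> {b} \<Longrightarrow> (evalgp (repl t p w) x = b) \<longleftrightarrow> (evalgp w x = b \<and> (\<forall>i\<in>set os. x ! i = b))"
  using assms unfolding ctxp_def by blast+

lemma distinct_mset_eq: "mset xs = mset ys \<Longrightarrow> distinct xs \<longleftrightarrow> distinct ys"
  by (rule mset_eq_imp_distinct_iff)

lemma mset_set_eq: "mset xs = mset ys \<Longrightarrow> set xs = set ys"
  by (metis set_mset_mset)

lemma disj_of_distinct:
  assumes "mset zs = mset os + mset us" "distinct zs"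
  shows "set os \<inter> set us = {}" "distinct os" "distinct us"
proof -
  have "distinct (os @ us)" using assms distinct_mset_eq[of zs "os @ us"] by simp
  then show "set os \<inter> set us = {}" "distinct os" "distinct us" by auto
qed

lemma ins_good:
  assumes invt: "invt b n t" and tg: "tgt b n h" and p: "p \<in> positions t"
    and l: "l < n" "l \<notin> set (lvs t)"
    and w: "w = Nd b (subt t p) (Lf l) \<or> w = Nd b (Lf l) (subt t p)"
  shows "upc b n h t (Some (repl t p w))"
proof -
  obtain os where os: "ctxp t p os" using ctx[OF p] by blast
  let ?t' = "repl t p w"
  have ms: "mset (lvs ?t') = mset (l # lvs t)"
    using ctxpD(1,2)[OF os] w by auto
  have gt: "gates t \<subseteq> {b}" using invt unfolding invt_def by auto
  have gw: "gates w \<subseteq> {b}" using ctxpD(4)[OF os] gt w by auto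
  have g: "gates ?t' \<subseteq> {b}"
    using ctxpD(3)[OF os, of w] gt gw by blast
  have invt': "invt b n ?t'"
    unfolding invt_def using g distinct_mset_eq[OF ms] mset_set_eq[OF ms] invt l unfolding invt_def by auto
  have len: "length (lvs ?t') = Suc (length (lvs t))"
    using arg_cong[OF ms, of size] by simp
  have "\<not> agrees h (Some t) x" if "\<not> agrees h (Some ?t') x" for x
  proof -
    from err_sub[OF invt' tg that] have e: "evalgp ?t' x = b" "h x \<noteq> b" by auto
    have "\<forall>i\<in>set (lvs ?t'). x ! i = b" using e(1) eval_allb[OF g] by blast
    hence "evalgp t x = b" using mset_set_eq[OF ms] eval_allb[of t b x] invt unfolding invt_def by auto
    then show ?thesis using e(2) unfolding agrees_def by auto
  qed
  then show ?thesis unfolding upc_def using invt' len by blast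
qed

lemma sub_neut:
  assumes invt: "invt b n t" and p: "p \<in> leafpos t"
    and l: "l < n" "l \<notin> set (lvs t)"
  shows "neutc b n t (Some (repl t p (Lf l)))"
proof -
  obtain os where os: "ctxp t p os" using ctx[OF leafpos_sub[OF p]] by blast
  obtain j where j: "subt t p = Lf j" using leafpos_Lf[OF p] by blast
  let ?t' = "repl t p (Lf l)"
  have m1: "mset (lvs t) = mset (j # os)" using ctxpD(1)[OF os] j by simp
  have ms: "mset (lvs ?t') = mset (l # os)" using ctxpD(2)[OF os] by simp
  have g: "gates ?t' \<subseteq> {b}"
    using ctxpD(3)[OF os, of "Lf l"] invt unfolding invt_def by (metis gates.simps(1) sup_bot_right subset_trans)
  have "distinct (j # os)" using distinct_mset_eq[OF m1] invt unfolding invt_def by simp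
  moreover have "set os \<subseteq> set (lvs t)" using mset_set_eq[OF m1] by auto
  ultimately have invt': "invt b n ?t'"
    unfolding invt_def using g distinct_mset_eq[OF ms] mset_set_eq[OF ms] invt l unfolding invt_def by auto
  have len: "length (lvs ?t') = length (lvs t)"
    using arg_cong[OF ms, of size] arg_cong[OF m1, of size] by simp
  show ?thesis unfolding neutc_def using invt' len by blast
qed

lemma ins_bad:
  assumes invt: "invt b n t" and tg: "tgt b n h" and p: "p \<in> positions t"
    and l: "l < n" "l \<notin> set (lvs t)"
    and w: "w = Nd (\<not>b) (subt t p) (Lf l) \<or> w = Nd (\<not>b) (Lf l) (subt t p)"
  shows "badc n h t (Some (repl t p w))"
proof -
  obtain os where os: "ctxp t p os" using ctx[OF p] by blast
  let ?t' = "repl t p w" and ?u = "subt t p"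
  have gt: "gates t \<subseteq> {b}" using invt unfolding invt_def by auto
  have gu: "gates ?u \<subseteq> {b}" using ctxpD(4)[OF os] gt by auto
  have ev: "(evalgp ?t' x = b) \<longleftrightarrow> ((evalgp ?u x = b \<or> x ! l = b) \<and> (\<forall>i\<in>set os. x ! i = b))" for x
    using ctxpD(5)[OF os gt, of w x] w eval_Nd_nb[of b] by auto
  have evu: "(evalgp ?u x = b) \<longleftrightarrow> (\<forall>i\<in>set (lvs ?u). x ! i = b)" for x
    using eval_allb[OF gu] .
  have m1: "mset (lvs t) = mset os + mset (lvs ?u)" using ctxpD(1)[OF os] .
  have st: "set (lvs t) = set os \<union> set (lvs ?u)" using mset_set_eq[of "lvs t" "os @ lvs ?u"] m1 by simp
  have dj: "set os \<inter> set (lvs ?u) = {}" using disj_of_distinct(1)[OF m1] invt unfolding invt_def by auto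
  obtain j where j: "j \<in> set (lvs ?u)" using lvs_ne[of ?u] last_in_set by blast
  have jn: "j < n" using j st invt unfolding invt_def by auto
  have sup: "\<not> agrees h (Some ?t') x" if "\<not> agrees h (Some t) x" for x
  proof -
    from err_sub[OF invt tg that] have e: "evalgp t x = b" "h x \<noteq> b" by auto
    hence "\<forall>i\<in>set (lvs t). x ! i = b" using eval_allb[OF gt] by blast
    hence "evalgp ?t' x = b" using ev evu st by auto
    then show ?thesis using e(2) unfolding agrees_def by auto
  qed
  define W where "W = insert l (set (lvs t))"
  define f where "f = (\<lambda>i. if i = j then \<not> b else b)"
  have Wn: "W \<subseteq> {..<n}" using invt l unfolding W_def invt_def by auto
  have cW: "card W \<le> Suc (length (lvs t))" unfolding W_def
  proof -
    have "card (insert l (set (lvs t))) \<le> Suc (card (set (lvs t)))" by (simp add: card_insert_if)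
    also have "card (set (lvs t)) \<le> length (lvs t)" by (rule card_length)
    finally show "card (insert l (set (lvs t))) \<le> Suc (length (lvs t))" by simp
  qed
  have pat: "agrees h (Some t) x \<and> \<not> agrees h (Some ?t') x" if px: "\<forall>i\<in>W. x ! i = f i" for x
  proof -
    have xj: "x ! j = (\<not> b)" using px j st unfolding W_def f_def by auto
    have "evalgp t x \<noteq> b" using eval_allb[OF gt, of x] xj j st by auto
    moreover have "h x \<noteq> b" using tg xj jn unfolding tgt_def by auto
    moreover have "evalgp ?t' x = b"
    proof -
      have "x ! l = b" using px l(2) j st unfolding W_def f_def by auto
      moreover have "\<forall>i\<in>set os. x ! i = b" using px dj j st unfolding W_def f_def by auto
      ultimately show ?thesis using ev by auto
    qed
    ultimately show ?thesis unfolding agrees_def by auto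
  qed
  show ?thesis unfolding badc_def using sup Wn cW pat by blast
qed


lemma pos_snoc:
  "q @ [e] \<in> positions t \<Longrightarrow> q \<in> positions t \<and> (\<exists>g a c. subt t q = Nd g a c
     \<and> subt t (q @ [e]) = (if e then c else a) \<and> subt t (q @ [\<not> e]) = (if e then a else c))"
proof (induction q arbitrary: t)
  case Nil
  then show ?case by (cases t) auto
next
  case (Cons d q)
  show ?case
  proof (cases t)
    case (Nd g0 l r)
    show ?thesis
    proof (cases d)
      case True
      with Cons.prems Nd have "q @ [e] \<in> positions r" by auto
      from Cons.IH[OF this] show ?thesis using Nd True by simp
    next
      case False
      with Cons.prems Nd have "q @ [e] \<in> positions l" by auto
      from Cons.IH[OF this] show ?thesis using Nd False by simp
    qed
  qed (use Cons.prems in auto)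
qed

lemma bad_subset:
  assumes invt: "invt b n t" and tg: "tgt b n h" and g': "gates t' \<subseteq> {b}"
    and j: "j \<in> set (lvs t)" and sub: "set (lvs t') \<subseteq> set (lvs t) - {j}"
  shows "badc n h t (Some t')"
proof -
  have gt: "gates t \<subseteq> {b}" using invt unfolding invt_def by auto
  have jn: "j < n" using j invt unfolding invt_def by auto
  have sup: "\<not> agrees h (Some t') x" if "\<not> agrees h (Some t) x" for x
  proof -
    from err_sub[OF invt tg that] have e: "evalgp t x = b" "h x \<noteq> b" by auto
    hence "\<forall>i\<in>set (lvs t). x ! i = b" using eval_allb[OF gt] by blast
    hence "evalgp t' x = b" using eval_allb[OF g'] sub by blast
    then show ?thesis using e(2) unfolding agrees_def by auto
  qed
  define W where "W = set (lvs t)"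
  define f where "f = (\<lambda>i. if i = j then \<not> b else b)"
  have Wn: "W \<subseteq> {..<n}" using invt unfolding W_def invt_def by auto
  have cW: "card W \<le> Suc (length (lvs t))" unfolding W_def using card_length le_SucI by blast
  have pat: "agrees h (Some t) x \<and> \<not> agrees h (Some t') x" if px: "\<forall>i\<in>W. x ! i = f i" for x
  proof -
    have xj: "x ! j = (\<not> b)" using px j unfolding W_def f_def by auto
    have "evalgp t x \<noteq> b" using eval_allb[OF gt, of x] xj j by auto
    moreover have "h x \<noteq> b" using tg xj jn unfolding tgt_def by auto
    moreover have "evalgp t' x = b"
    proof -
      have "\<forall>i\<in>set (lvs t'). x ! i = b"
      proof
        fix i assume "i \<in> set (lvs t')"
        with sub have "i \<in> W" "i \<noteq> j" unfolding W_def by auto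
        with px show "x ! i = b" unfolding f_def by auto
      qed
      then show ?thesis using eval_allb[OF g', of x] by blast
    qed
    ultimately show ?thesis unfolding agrees_def by auto
  qed
  show ?thesis unfolding badc_def using sup Wn cW pat by blast
qed

lemma del_bad:
  assumes invt: "invt b n t" and tg: "tgt b n h" and p: "p \<in> positions t"
  shows "badc n h t (del_at t p)"
proof (cases "p = []")
  case True
  have gt: "gates t \<subseteq> {b}" using invt unfolding invt_def by auto
  obtain j where j: "j \<in> set (lvs t)" using lvs_ne[of t] last_in_set by blast
  have jn: "j < n" using j invt unfolding invt_def by auto
  define W where "W = set (lvs t)"
  define f where "f = (\<lambda>i. if i = j then \<not> b else b)"
  have Wn: "W \<subseteq> {..<n}" using invt unfolding W_def invt_def by auto
  have cW: "card W \<le> Suc (length (lvs t))" unfolding W_def using card_length le_SucI by blast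
  have pat: "agrees h (Some t) x \<and> \<not> agrees h None x" if px: "\<forall>i\<in>W. x ! i = f i" for x
  proof -
    have xj: "x ! j = (\<not> b)" using px j unfolding W_def f_def by auto
    have "evalgp t x \<noteq> b" using eval_allb[OF gt, of x] xj j by auto
    moreover have "h x \<noteq> b" using tg xj jn unfolding tgt_def by auto
    ultimately show ?thesis unfolding agrees_def by auto
  qed
  show ?thesis using True unfolding del_at_def badc_def using Wn cW pat
    by (auto simp: agrees_def)
next
  case False
  define q where "q = butlast p"
  define e where "e = last p"
  have pq: "p = q @ [e]" using False unfolding q_def e_def by simp
  from pos_snoc[of q e t] p pq obtain g a c where q: "q \<in> positions t"
    and sq: "subt t q = Nd g a c" and se: "subt t (q @ [e]) = (if e then c else a)"
    and sne: "subt t (q @ [\<not> e]) = (if e then a else c)" by auto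
  have del: "del_at t p = Some (repl t q (subt t (q @ [\<not> e])))"
    using False unfolding del_at_def q_def e_def by simp
  let ?sib = "subt t (q @ [\<not> e])" and ?rem = "subt t (q @ [e])"
  obtain os where os: "ctxp t q os" using ctx[OF q] by blast
  have gt: "gates t \<subseteq> {b}" using invt unfolding invt_def by auto
  have gsq: "gates (Nd g a c) \<subseteq> {b}" using ctxpD(4)[OF os] sq gt by auto
  have gsib: "gates ?sib \<subseteq> {b}" using gsq sne by auto
  have g': "gates (repl t q ?sib) \<subseteq> {b}" using ctxpD(3)[OF os, of ?sib] gt gsib by blast
  have m1: "mset (lvs t) = mset (os @ lvs a @ lvs c)" using ctxpD(1)[OF os] sq by simp
  have dist: "distinct (os @ lvs a @ lvs c)" using distinct_mset_eq[OF m1] invt unfolding invt_def by simp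
  have st: "set (lvs t) = set os \<union> set (lvs a) \<union> set (lvs c)" using mset_set_eq[OF m1] by auto
  obtain j where j: "j \<in> set (lvs ?rem)" using lvs_ne[of ?rem] last_in_set by blast
  have m2: "set (lvs (repl t q ?sib)) = set os \<union> set (lvs ?sib)"
    using mset_set_eq[of "lvs (repl t q ?sib)" "os @ lvs ?sib"] ctxpD(2)[OF os, of ?sib] by simp
  have jt: "j \<in> set (lvs t)" using j se st by (auto split: if_splits)
  have "set (lvs (repl t q ?sib)) \<subseteq> set (lvs t) - {j}"
    using m2 st j se sne dist by (auto split: if_splits)
  then show ?thesis using bad_subset[OF invt tg g' jt] del by simp
qed


lemma inputs_eq: "inputs n = {xs. set xs \<subseteq> UNIV \<and> length xs = n}"
  unfolding inputs_def by auto

lemma inputs_finite: "finite (inputs n)"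
  unfolding inputs_eq by (rule finite_lists_length_eq) simp

lemma inputs_card: "card (inputs n) = 2 ^ n"
  using card_lists_length_eq[of "UNIV::bool set" n] unfolding inputs_def by simp

lemma inputs_ne: "inputs n \<noteq> {}"
  unfolding inputs_def by (metis (mono_tags) empty_iff length_replicate mem_Collect_eq)

lemma samples_Suc: "samples n (Suc k) = pmf_of_set (inputs n) \<bind> (\<lambda>x. map_pmf (Cons x) (samples n k))"
  by (simp add: map_pmf_def)

lemma samples_set: "S \<in> set_pmf (samples n s) \<Longrightarrow> length S = s \<and> set S \<subseteq> inputs n"
proof (induction s arbitrary: S)
  case 0
  then show ?case by simp
next
  case (Suc k)
  from Suc.prems obtain x xa where x: "x \<in> inputs n" and xa: "xa \<in> set_pmf (samples n k)" and S: "S = x # xa"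
    unfolding samples_Suc using inputs_finite inputs_ne by auto
  from Suc.IH[OF xa] x S show ?case by auto
qed

lemma samples_finite: "finite (set_pmf (samples n s))"
proof -
  have "set_pmf (samples n s) \<subseteq> {xs. set xs \<subseteq> inputs n \<and> length xs = s}" using samples_set by blast
  then show ?thesis using finite_lists_length_eq[OF inputs_finite] finite_subset by blast
qed

definition cnt :: "(bool list \<Rightarrow> bool) \<Rightarrow> bool list list \<Rightarrow> nat" where
  "cnt P S = length (filter P S)"

definition fracs :: "nat \<Rightarrow> (bool list \<Rightarrow> bool) \<Rightarrow> real" where
  "fracs n P = real (card {x \<in> inputs n. P x}) / 2 ^ n"

lemma sum_split_card:
  assumes "finite A"
  shows "(\<Sum>x\<in>A. (if P x then (th::real) else 1)) = real (card {x\<in>A. P x}) * th + real (card {x\<in>A. \<not> P x})"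
proof -
  have "(\<Sum>x\<in>A. (if P x then th else 1)) = (\<Sum>x\<in>{x\<in>A. P x}. th) + (\<Sum>x\<in>{x\<in>A. \<not> P x}. 1)"
    using assms by (simp add: sum.If_cases Int_def conj_commute)
  then show ?thesis by simp
qed

lemma card_compl_inputs: "card {x\<in>inputs n. \<not> P x} = 2 ^ n - card {x\<in>inputs n. P x}"
proof -
  have "{x\<in>inputs n. \<not> P x} = inputs n - {x\<in>inputs n. P x}" by auto
  then show ?thesis using inputs_card inputs_finite by (simp add: card_Diff_subset)
qed

lemma mgf:
  fixes th :: real
  shows "measure_pmf.expectation (samples n s) (\<lambda>S. th ^ cnt P S) = (1 - fracs n P + fracs n P * th) ^ s"
proof (induction s)
  case 0
  then show ?case by (simp add: cnt_def)
next
  case (Suc k)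
  have e1: "measure_pmf.expectation (map_pmf (Cons x) (samples n k)) (\<lambda>S. th ^ cnt P S)
      = (if P x then th else 1) * (1 - fracs n P + fracs n P * th) ^ k" for x
    by (simp add: cnt_def Suc[symmetric, unfolded cnt_def])
  have "measure_pmf.expectation (samples n (Suc k)) (\<lambda>S. th ^ cnt P S)
     = (\<Sum>x\<in>inputs n. measure_pmf.expectation (map_pmf (Cons x) (samples n k)) (\<lambda>S. th ^ cnt P S) /\<^sub>R real (card (inputs n)))"
    unfolding samples_Suc
    by (rule pmf_expectation_bind_pmf_of_set) (use inputs_finite inputs_ne samples_finite in auto)
  also have "\<dots> = (\<Sum>x\<in>inputs n. (if P x then th else 1)) * (1 - fracs n P + fracs n P * th) ^ k / 2 ^ n"
    unfolding e1 by (simp add: inputs_card sum_divide_distrib[symmetric] sum_distrib_right[symmetric] sum_distrib_left[symmetric] divide_inverse mult_ac)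
  also have "(\<Sum>x\<in>inputs n. (if P x then th else 1)) = real (card {x\<in>inputs n. P x}) * th + real (card {x\<in>inputs n. \<not> P x})"
    by (rule sum_split_card[OF inputs_finite])
  also have "real (card {x\<in>inputs n. \<not> P x}) = 2 ^ n - real (card {x\<in>inputs n. P x})"
  proof -
    have "card {x\<in>inputs n. P x} \<le> 2 ^ n"
      by (metis (no_types, lifting) inputs_card inputs_finite card_mono mem_Collect_eq subsetI)
    then show ?thesis unfolding card_compl_inputs by (simp add: of_nat_diff)
  qed
  also have "(real (card {x\<in>inputs n. P x}) * th + (2 ^ n - real (card {x\<in>inputs n. P x})))
      * (1 - fracs n P + fracs n P * th) ^ k / 2 ^ n = (1 - fracs n P + fracs n P * th) ^ Suc k"
    unfolding fracs_def by (simp add: field_simps)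
  finally show ?case .
qed

lemma prob_le_exp:
  fixes g :: "'a \<Rightarrow> real"
  assumes "finite (set_pmf M)" "\<And>x. 0 \<le> g x" "\<And>x. Q x \<Longrightarrow> 1 \<le> g x"
  shows "measure_pmf.prob M {x. Q x} \<le> measure_pmf.expectation M g"
proof -
  have "measure_pmf.prob M {x. Q x} = measure_pmf.expectation M (indicator {x. Q x})"
    by simp
  also have "\<dots> \<le> measure_pmf.expectation M g"
    by (rule integral_mono) (use assms in \<open>auto intro: integrable_measure_pmf_finite split: split_indicator\<close>)
  finally show ?thesis .
qed


definition pat :: "nat \<Rightarrow> nat set \<Rightarrow> (nat \<Rightarrow> bool) \<Rightarrow> bool list set" where
  "pat n W f = {x \<in> inputs n. \<forall>i\<in>W. x ! i = f i}"

lemma pat_card: "W \<subseteq> {..<n} \<Longrightarrow> card (pat n W f) = 2 ^ (n - card W)"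
proof (induction n arbitrary: W f)
  case 0
  then have "W = {}" by auto
  moreover have "inputs 0 = {[]}" unfolding inputs_def by auto
  ultimately show ?case unfolding pat_def by simp
next
  case (Suc n)
  define W' where "W' = {i. Suc i \<in> W}"
  define B0 where "B0 = (if 0 \<in> W then {f 0} else UNIV)"
  have W'n: "W' \<subseteq> {..<n}" using Suc.prems unfolding W'_def by auto
  have fin: "finite W'" using W'n finite_subset by blast
  have Weq: "W = Suc ` W' \<union> (W \<inter> {0})"
  proof (intro set_eqI iffI)
    fix i assume i: "i \<in> W"
    show "i \<in> Suc ` W' \<union> (W \<inter> {0})"
    proof (cases i)
      case 0 then show ?thesis using i by simp
    next
      case (Suc j) then have "j \<in> W'" using i unfolding W'_def by simp
      then show ?thesis using Suc by blast
    qed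
  next
    fix i assume "i \<in> Suc ` W' \<union> (W \<inter> {0})"
    then show "i \<in> W" unfolding W'_def by blast
  qed
  have c1: "card W = card (Suc ` W') + card (W \<inter> {0})"
    by (subst Weq, rule card_Un_disjoint) (use fin in auto)
  have c2: "card (Suc ` W') = card W'" by (rule card_image) simp
  have c3: "card (W \<inter> {0}) = (if 0 \<in> W then 1 else 0)"
  proof (cases "0 \<in> W")
    case True then have "W \<inter> {0} = {0}" by blast
    then show ?thesis using True by simp
  next
    case False then have "W \<inter> {0} = {}" by blast
    then show ?thesis using False by simp
  qed
  have cW'n: "card W' \<le> n"
  proof -
    have "card W' \<le> card {..<n}" by (rule card_mono) (use W'n in auto)
    then show ?thesis by simp
  qed
  have Aeq: "pat (Suc n) W f = (\<lambda>(b, y). b # y) ` (B0 \<times> pat n W' (f \<circ> Suc))"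
  proof (intro set_eqI iffI)
    fix x assume x: "x \<in> pat (Suc n) W f"
    then have lx: "length x = Suc n" and px: "\<forall>i\<in>W. x ! i = f i" unfolding pat_def inputs_def by simp_all
    from lx obtain b y where xy: "x = b # y" by (cases x) simp_all
    have ly: "length y = n" using lx xy by simp
    have "b \<in> B0"
    proof (cases "0 \<in> W")
      case True
      then have "x ! 0 = f 0" using px by blast
      then show ?thesis using True xy unfolding B0_def by simp
    qed (simp add: B0_def)
    moreover have "y \<in> pat n W' (f \<circ> Suc)"
    proof -
      have "\<forall>i\<in>W'. y ! i = (f \<circ> Suc) i"
      proof
        fix i assume "i \<in> W'"
        then have "Suc i \<in> W" unfolding W'_def by simp
        then have "x ! Suc i = f (Suc i)" using px by blast
        then show "y ! i = (f \<circ> Suc) i" using xy by simp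
      qed
      then show ?thesis using ly unfolding pat_def inputs_def by simp
    qed
    ultimately show "x \<in> (\<lambda>(b, y). b # y) ` (B0 \<times> pat n W' (f \<circ> Suc))" using xy by blast
  next
    fix x assume "x \<in> (\<lambda>(b, y). b # y) ` (B0 \<times> pat n W' (f \<circ> Suc))"
    then obtain b y where xy: "x = b # y" and b: "b \<in> B0" and y: "y \<in> pat n W' (f \<circ> Suc)" by auto
    have "\<forall>i\<in>W. x ! i = f i"
    proof
      fix i assume i: "i \<in> W"
      show "x ! i = f i"
      proof (cases i)
        case 0 then show ?thesis using b i xy unfolding B0_def by simp
      next
        case (Suc j)
        then have "j \<in> W'" using i unfolding W'_def by simp
        then show ?thesis using y xy Suc unfolding pat_def by simp
      qed
    qed
    then show "x \<in> pat (Suc n) W f" using y xy unfolding pat_def inputs_def by simp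
  qed
  have inj: "inj_on (\<lambda>(b, y). b # y) (B0 \<times> pat n W' (f \<circ> Suc))"
    by (rule inj_onI) auto
  have "card (pat (Suc n) W f) = card (B0 \<times> pat n W' (f \<circ> Suc))"
    unfolding Aeq by (rule card_image[OF inj])
  also have "\<dots> = card B0 * 2 ^ (n - card W')"
    using Suc.IH[OF W'n] by (simp add: card_cartesian_product)
  also have "\<dots> = 2 ^ (Suc n - card W)"
  proof (cases "0 \<in> W")
    case True
    then show ?thesis using c1 c2 c3 unfolding B0_def by simp
  next
    case False
    then have "card W = card W'" using c1 c2 c3 by simp
    then show ?thesis using False cW'n unfolding B0_def by (simp add: Suc_diff_le)
  qed
  finally show ?case .
qed

lemma pat_frac: "W \<subseteq> {..<n} \<Longrightarrow> fracs n (\<lambda>x. x \<in> pat n W f) = 1 / 2 ^ card W"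
proof -
  assume W: "W \<subseteq> {..<n}"
  have cW: "card W \<le> n" using W by (metis card_lessThan card_mono finite_lessThan)
  have "{x \<in> inputs n. x \<in> pat n W f} = pat n W f" unfolding pat_def by auto
  then have "fracs n (\<lambda>x. x \<in> pat n W f) = 2 ^ (n - card W) / 2 ^ n"
    unfolding fracs_def using pat_card[OF W] by simp
  also have "\<dots> = 1 / 2 ^ card W" using cW by (simp add: power_diff)
  finally show ?thesis .
qed

lemma fracs_nonneg: "0 \<le> fracs n P" unfolding fracs_def by simp

lemma fracs_le1: "fracs n P \<le> 1"
proof -
  have "card {x \<in> inputs n. P x} \<le> card (inputs n)" by (rule card_mono[OF inputs_finite]) auto
  then show ?thesis unfolding fracs_def inputs_card by simp
qed

lemma fracs_mono: "(\<And>x. x \<in> inputs n \<Longrightarrow> P x \<Longrightarrow> Q x) \<Longrightarrow> fracs n P \<le> fracs n Q"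
proof -
  assume "\<And>x. x \<in> inputs n \<Longrightarrow> P x \<Longrightarrow> Q x"
  then have "card {x \<in> inputs n. P x} \<le> card {x \<in> inputs n. Q x}"
    by (intro card_mono) (auto intro: finite_subset[OF _ inputs_finite])
  then show ?thesis unfolding fracs_def by (simp add: divide_right_mono)
qed

lemma upper_tail:
  fixes a :: real
  assumes "real s * fracs n P \<le> a / 4"
  shows "measure_pmf.prob (samples n s) {S. a < real (cnt P S)} \<le> exp (- a / 2)"
proof -
  let ?q = "fracs n P"
  have "measure_pmf.prob (samples n s) {S. a < real (cnt P S)}
      \<le> measure_pmf.expectation (samples n s) (\<lambda>S. exp 1 ^ cnt P S / exp a)"
  proof (rule prob_le_exp[OF samples_finite])
    fix S assume "a < real (cnt P S)"
    then have "exp a \<le> exp 1 ^ cnt P S" by (simp add: exp_of_nat_mult[symmetric])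
    then show "1 \<le> exp 1 ^ cnt P S / exp a" by simp
  qed simp
  also have "\<dots> = (1 - ?q + ?q * exp 1) ^ s / exp a"
    using mgf[of n s "exp 1" P] by simp
  also have "(1 - ?q + ?q * exp 1) ^ s \<le> exp (?q * (exp 1 - 1)) ^ s"
  proof (rule power_mono)
    show "1 - ?q + ?q * exp 1 \<le> exp (?q * (exp 1 - 1))"
      using exp_ge_add_one_self[of "?q * (exp 1 - 1)"] by (simp add: algebra_simps)
    show "0 \<le> 1 - ?q + ?q * exp 1" using fracs_le1[of n P] fracs_nonneg[of n P]
      by (smt (verit) exp_gt_zero mult_nonneg_nonneg)
  qed
  also have "exp (?q * (exp 1 - 1)) ^ s = exp (real s * ?q * (exp 1 - 1))"
    by (simp add: exp_of_nat_mult[symmetric] mult_ac)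
  finally have "measure_pmf.prob (samples n s) {S. a < real (cnt P S)} \<le> exp (real s * ?q * (exp 1 - 1)) / exp a"
    by (simp add: divide_right_mono)
  also have "\<dots> = exp (real s * ?q * (exp 1 - 1) - a)" by (simp add: exp_diff)
  also have "\<dots> \<le> exp (- a / 2)"
  proof -
    have e: "exp (1::real) \<le> 3" using exp_le by simp
    have "real s * ?q * (exp 1 - 1) \<le> (a / 4) * 2"
    proof (rule mult_mono)
      have "0 \<le> real s * ?q" using fracs_nonneg[of n P] by simp
      then show "0 \<le> a / 4" using assms by linarith
      show "real s * ?q \<le> a / 4" using assms .
      show "exp 1 - 1 \<le> (2::real)" using e by simp
      show "0 \<le> exp 1 - (1::real)" by simp
    qed
    then show ?thesis by simp
  qed
  finally show ?thesis .
qed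

lemma lower_tail:
  fixes a :: real
  shows "measure_pmf.prob (samples n s) {S. real (cnt P S) \<le> a} \<le> exp (a - real s * fracs n P / 2)"
proof -
  let ?q = "fracs n P"
  have "measure_pmf.prob (samples n s) {S. real (cnt P S) \<le> a}
      \<le> measure_pmf.expectation (samples n s) (\<lambda>S. exp a * exp (-1) ^ cnt P S)"
  proof (rule prob_le_exp[OF samples_finite])
    fix S assume "real (cnt P S) \<le> a"
    then have "1 \<le> exp (a - real (cnt P S))" by simp
    also have "exp (a - real (cnt P S)) = exp a * exp (-1) ^ cnt P S"
      by (simp add: exp_diff exp_of_nat_mult[symmetric] exp_minus field_simps)
    finally show "1 \<le> exp a * exp (-1) ^ cnt P S" .
  qed simp
  also have "\<dots> = exp a * (1 - ?q + ?q * exp (-1)) ^ s"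
    using mgf[of n s "exp (-1)" P] by simp
  also have "(1 - ?q + ?q * exp (-1)) ^ s \<le> exp (- ?q / 2) ^ s"
  proof (rule power_mono)
    have e: "exp (-1::real) \<le> 1/2"
    proof -
      have "2 \<le> exp (1::real)" using exp_ge_add_one_self[of 1] by simp
      then show ?thesis by (simp add: exp_minus field_simps)
    qed
    have "1 - ?q + ?q * exp (-1) \<le> 1 - ?q / 2"
      using mult_left_mono[OF e fracs_nonneg[of n P]] by simp
    also have "\<dots> \<le> exp (- ?q / 2)" using exp_ge_add_one_self[of "- ?q / 2"] by simp
    finally show "1 - ?q + ?q * exp (-1) \<le> exp (- ?q / 2)" .
    show "0 \<le> 1 - ?q + ?q * exp (-1)" using fracs_le1[of n P] fracs_nonneg[of n P]
      by (smt (verit) exp_gt_zero mult_nonneg_nonneg)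
  qed
  also have "exp (- ?q / 2) ^ s = exp (- (real s * ?q / 2))"
    by (simp add: exp_of_nat_mult[symmetric] mult_ac)
  finally have "measure_pmf.prob (samples n s) {S. real (cnt P S) \<le> a} \<le> exp a * exp (- (real s * ?q / 2))"
    by (simp add: mult_left_mono)
  also have "\<dots> = exp (a - real s * ?q / 2)" by (simp add: exp_add[symmetric])
  finally show ?thesis .
qed

lemma zero_tail:
  shows "measure_pmf.prob (samples n s) {S. cnt P S = 0} \<le> exp (- real s * fracs n P)"
proof -
  let ?q = "fracs n P"
  have "measure_pmf.prob (samples n s) {S. cnt P S = 0}
      \<le> measure_pmf.expectation (samples n s) (\<lambda>S. (0::real) ^ cnt P S)"
    by (rule prob_le_exp[OF samples_finite]) auto
  also have "\<dots> = (1 - ?q) ^ s" using mgf[of n s 0 P] by simp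
  also have "\<dots> \<le> exp (- ?q) ^ s"
    by (rule power_mono) (use exp_ge_add_one_self[of "- ?q"] fracs_le1[of n P] in auto)
  also have "\<dots> = exp (- real s * ?q)" by (simp add: exp_of_nat_mult[symmetric] mult_ac)
  finally show ?thesis .
qed


lemma prob_bind:
  "measure_pmf.prob (M \<bind> f) C = measure_pmf.expectation M (\<lambda>x. measure_pmf.prob (f x) C)"
proof -
  have "ennreal (measure_pmf.prob (M \<bind> f) C) = (\<integral>\<^sup>+x. ennreal (measure_pmf.prob (f x) C) \<partial>M)"
    by (simp add: measure_pmf.emeasure_eq_measure[symmetric])
  also have "\<dots> = ennreal (measure_pmf.expectation M (\<lambda>x. measure_pmf.prob (f x) C))"
    by (rule nn_integral_eq_integral)
       (auto intro!: measure_pmf.integrable_const_bound[where B=1])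
  finally show ?thesis by (simp add: integral_nonneg_AE)
qed

lemma prob_one: "set_pmf M \<subseteq> C \<Longrightarrow> measure_pmf.prob M C = 1"
  by (subst measure_pmf.prob_eq_1) (auto simp: AE_measure_pmf_iff)

lemma lb_pmf_of_set:
  assumes "finite A" "A \<noteq> {}" "\<And>a. a \<in> A \<Longrightarrow> w a \<le> measure_pmf.prob (f a) C"
  shows "(\<Sum>a\<in>A. w a) / real (card A) \<le> measure_pmf.prob (pmf_of_set A \<bind> f) C"
proof -
  have "measure_pmf.prob (pmf_of_set A \<bind> f) C = (\<Sum>a\<in>A. measure_pmf.prob (f a) C) / real (card A)"
    unfolding prob_bind using assms(1,2) by (simp add: integral_pmf_of_set)
  moreover have "(\<Sum>a\<in>A. w a) \<le> (\<Sum>a\<in>A. measure_pmf.prob (f a) C)"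
    by (rule sum_mono) (use assms(3) in auto)
  ultimately show ?thesis by (simp add: divide_right_mono)
qed

lemma lb_exp:
  assumes "\<And>x. x \<in> set_pmf M \<Longrightarrow> x \<in> C \<Longrightarrow> a \<le> phi x" "\<And>x. 0 \<le> phi x" "\<And>x. phi x \<le> 1" "0 \<le> a"
  shows "a * measure_pmf.prob M C \<le> measure_pmf.expectation M phi"
proof -
  have "a * measure_pmf.prob M C = measure_pmf.expectation M (\<lambda>x. a * indicator C x)"
    by simp
  also have "\<dots> \<le> measure_pmf.expectation M phi"
  proof (rule integral_mono_AE)
    show "integrable (measure_pmf M) (\<lambda>x. a * indicator C x)"
      by (rule measure_pmf.integrable_const_bound[where B="\<bar>a\<bar>"]) (auto split: split_indicator)
    show "integrable (measure_pmf M) phi"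
      by (rule measure_pmf.integrable_const_bound[where B=1]) (use assms(2,3) in auto)
    show "AE x in measure_pmf M. a * indicator C x \<le> phi x"
      unfolding AE_measure_pmf_iff using assms by (auto split: split_indicator)
  qed
  finally show ?thesis .
qed

lemma sum_ind_card: "finite A \<Longrightarrow> (\<Sum>x\<in>A. if P x then (1::real) else 0) = real (card {x\<in>A. P x})"
  by (simp add: sum.If_cases Int_def conj_commute)

lemma card_fresh:
  assumes "invt b n t"
  shows "card {l \<in> {0..<n}. l \<notin> set (lvs t)} = n - length (lvs t)"
proof -
  have "{l \<in> {0..<n}. l \<notin> set (lvs t)} = {0..<n} - set (lvs t)" by auto
  moreover have "set (lvs t) \<subseteq> {0..<n}" using assms unfolding invt_def by auto
  moreover have "card (set (lvs t)) = length (lvs t)" using assms unfolding invt_def by (simp add: distinct_card)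
  ultimately show ?thesis by (simp add: card_Diff_subset)
qed

definition innerm :: "gp \<Rightarrow> mop \<Rightarrow> nat \<Rightarrow> bool \<Rightarrow> gp option pmf" where
  "innerm t op l g = (case op of
          INS \<Rightarrow> pmf_of_set (positions t) \<bind> (\<lambda>p. pmf_of_set {True, False} \<bind> (\<lambda>b.
                     return_pmf (Some (repl t p (if b then Nd g (subt t p) (Lf l) else Nd g (Lf l) (subt t p))))))
        | DEL \<Rightarrow> pmf_of_set (positions t) \<bind> (\<lambda>p. return_pmf (del_at t p))
        | SUB \<Rightarrow> pmf_of_set (leafpos t) \<bind> (\<lambda>p. return_pmf (Some (repl t p (Lf l)))))"

lemma hvl_Some:
  "hvl n (Some t) = pmf_of_set {INS, DEL, SUB} \<bind> (\<lambda>op. pmf_of_set {0..<n} \<bind> (\<lambda>l. pmf_of_set {True, False} \<bind> (\<lambda>g.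
     innerm t op l g)))"
  unfolding hvl_def innerm_def by simp

definition cls :: "bool \<Rightarrow> nat \<Rightarrow> (bool list \<Rightarrow> bool) \<Rightarrow> gp \<Rightarrow> gp option set" where
  "cls b n h t = {X'. upc b n h t X' \<or> neutc b n t X' \<or> badc n h t X'}"

lemma pos_ne: "positions t \<noteq> {}" using positions_ne by blast

lemma inner_cls:
  assumes invt: "invt b n t" and tg: "tgt b n h" and l: "l < n" "l \<notin> set (lvs t)"
  shows "set_pmf (innerm t op l g) \<subseteq> cls b n h t"
proof (cases op)
  case INS
  have "Some (repl t p w) \<in> cls b n h t" if p: "p \<in> positions t"
    and w: "w = Nd g (subt t p) (Lf l) \<or> w = Nd g (Lf l) (subt t p)" for p w
  proof (cases "g = b")
    case True
    then show ?thesis using ins_good[OF invt tg p l] w unfolding cls_def by auto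
  next
    case False
    then have "g = (\<not> b)" by auto
    then show ?thesis using ins_bad[OF invt tg p l] w unfolding cls_def by auto
  qed
  then show ?thesis using INS positions_finite[of t] pos_ne[of t] unfolding innerm_def by auto
next
  case DEL
  then show ?thesis using del_bad[OF invt tg] positions_finite[of t] pos_ne[of t] unfolding cls_def innerm_def by auto
next
  case SUB
  then show ?thesis using sub_neut[OF invt _ l] leafpos_finite[of t] leafpos_ne[of t] unfolding cls_def innerm_def by auto
qed

lemma inner_up:
  assumes invt: "invt b n t" and tg: "tgt b n h" and l: "l < n" "l \<notin> set (lvs t)"
  shows "set_pmf (innerm t INS l b) \<subseteq> {X'. upc b n h t X'}"
proof -
  have "upc b n h t (Some (repl t p w))" if p: "p \<in> positions t"
    and w: "w = Nd b (subt t p) (Lf l) \<or> w = Nd b (Lf l) (subt t p)" for p w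
    using ins_good[OF invt tg p l w] .
  then show ?thesis using positions_finite[of t] pos_ne[of t] unfolding innerm_def by auto
qed

lemma hvl_cls:
  assumes invt: "invt b n t" and tg: "tgt b n h" and n: "0 < n"
  shows "real (n - length (lvs t)) / real n \<le> measure_pmf.prob (hvl n (Some t)) (cls b n h t)"
proof -
  have lv: "real (n - length (lvs t)) / real n \<le>
     measure_pmf.prob (pmf_of_set {0..<n} \<bind> (\<lambda>l. pmf_of_set {True, False} \<bind> (\<lambda>g. innerm t op l g)))
     (cls b n h t)" for op
  proof -
    have "(\<Sum>l\<in>{0..<n}. if l \<notin> set (lvs t) then (1::real) else 0) / real (card {0..<n}) \<le>
       measure_pmf.prob (pmf_of_set {0..<n} \<bind> (\<lambda>l. pmf_of_set {True, False} \<bind> (\<lambda>g. innerm t op l g)))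
     (cls b n h t)"
    proof (rule lb_pmf_of_set)
      fix l assume l: "l \<in> {0..<n}"
      show "(if l \<notin> set (lvs t) then 1 else 0) \<le> measure_pmf.prob (pmf_of_set {True, False} \<bind> (\<lambda>g. innerm t op l g)) (cls b n h t)"
      proof (cases "l \<in> set (lvs t)")
        case False
        have "measure_pmf.prob (pmf_of_set {True, False} \<bind> (\<lambda>g. innerm t op l g)) (cls b n h t) = 1"
          apply (rule prob_one)
          using inner_cls[OF invt tg _ False, of op] l by auto
        then show ?thesis using False by simp
      qed simp
    qed (use n in auto)
    then show ?thesis using sum_ind_card[of "{0..<n}" "\<lambda>l. l \<notin> set (lvs t)"] card_fresh[OF invt] by simp
  qed
  have "(\<Sum>op\<in>{INS, DEL, SUB}. real (n - length (lvs t)) / real n) / real (card {INS, DEL, SUB})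
        \<le> measure_pmf.prob (hvl n (Some t)) (cls b n h t)"
    unfolding hvl_Some by (rule lb_pmf_of_set) (use lv in auto)
  then show ?thesis by simp
qed

lemma hvl_up:
  assumes invt: "invt b n t" and tg: "tgt b n h" and n: "0 < n"
  shows "real (n - length (lvs t)) / (6 * real n) \<le> measure_pmf.prob (hvl n (Some t)) {X'. upc b n h t X'}"
proof -
  let ?C = "{X'. upc b n h t X'}"
  have gl: "(if g = b then 1 else 0) \<le> measure_pmf.prob (innerm t op l g) ?C"
    if "op = INS" "l < n" "l \<notin> set (lvs t)" for op g l
  proof (cases "g = b")
    case True
    then have "innerm t op l g = innerm t INS l b" using that by simp
    then show ?thesis using True prob_one[OF inner_up[OF invt tg that(2,3)]] by simp
  qed simp
  have ll: "(if op = INS then real (n - length (lvs t)) / real n / 2 else 0) \<le>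
     measure_pmf.prob (pmf_of_set {0..<n} \<bind> (\<lambda>l. pmf_of_set {True, False} \<bind> (\<lambda>g. innerm t op l g))) ?C" for op
  proof (cases "op = INS")
    case True
    have "(\<Sum>l\<in>{0..<n}. if l \<notin> set (lvs t) then (1::real) / 2 else 0) / real (card {0..<n}) \<le>
       measure_pmf.prob (pmf_of_set {0..<n} \<bind> (\<lambda>l. pmf_of_set {True, False} \<bind> (\<lambda>g. innerm t op l g))) ?C"
    proof (rule lb_pmf_of_set)
      fix l assume l: "l \<in> {0..<n}"
      show "(if l \<notin> set (lvs t) then (1::real) / 2 else 0) \<le> measure_pmf.prob (pmf_of_set {True, False} \<bind> (\<lambda>g. innerm t op l g)) ?C"
      proof (cases "l \<in> set (lvs t)")
        case False
        have "(\<Sum>g\<in>{True, False}. if g = b then (1::real) else 0) / real (card {True, False}) \<le>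
            measure_pmf.prob (pmf_of_set {True, False} \<bind> (\<lambda>g. innerm t op l g)) ?C"
          by (rule lb_pmf_of_set) (use gl[OF True _ False] l in auto)
        moreover have "(\<Sum>g\<in>{True, False}. if g = b then (1::real) else 0) = 1" by (cases b) auto
        ultimately show ?thesis using False by simp
      qed simp
    qed (use n in auto)
    moreover have "(\<Sum>l\<in>{0..<n}. if l \<notin> set (lvs t) then (1::real) / 2 else 0)
       = (\<Sum>l\<in>{0..<n}. if l \<notin> set (lvs t) then (1::real) else 0) / 2"
      by (simp add: sum_divide_distrib) (rule sum.cong, auto)
    ultimately show ?thesis
      using sum_ind_card[of "{0..<n}" "\<lambda>l. l \<notin> set (lvs t)"] card_fresh[OF invt] True by simp
  qed simp
  have "(\<Sum>op\<in>{INS, DEL, SUB}. (if op = INS then real (n - length (lvs t)) / real n / 2 else 0)) / real (card {INS, DEL, SUB})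
        \<le> measure_pmf.prob (hvl n (Some t)) ?C"
    unfolding hvl_Some by (rule lb_pmf_of_set) (use ll in auto)
  then show ?thesis by simp
qed


lemma prob_mono_supp:
  "(\<And>x. x \<in> set_pmf M \<Longrightarrow> x \<in> A \<Longrightarrow> x \<in> B) \<Longrightarrow> measure_pmf.prob M A \<le> measure_pmf.prob M B"
proof -
  assume h: "\<And>x. x \<in> set_pmf M \<Longrightarrow> x \<in> A \<Longrightarrow> x \<in> B"
  have "measure_pmf.prob M A = measure_pmf.prob M (A \<inter> set_pmf M)" by (simp add: measure_Int_set_pmf)
  also have "\<dots> \<le> measure_pmf.prob M B" by (rule measure_pmf.finite_measure_mono) (use h in auto)
  finally show ?thesis .
qed

lemma prob_compl_ge: "measure_pmf.prob M {x. P x} = 1 - measure_pmf.prob M {x. \<not> P x}"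
proof -
  have "measure_pmf.prob M (space (measure_pmf M) - {x. \<not> P x}) = 1 - measure_pmf.prob M {x. \<not> P x}"
    by (rule measure_pmf.prob_compl) simp
  moreover have "space (measure_pmf M) - {x. \<not> P x} = {x. P x}" by auto
  ultimately show ?thesis by simp
qed

lemma prob_union_le: "measure_pmf.prob M (A \<union> B) \<le> measure_pmf.prob M A + measure_pmf.prob M B"
  by (rule measure_Un_le) auto

lemma cnt_add:
  assumes "\<forall>x\<in>set S. P x \<longrightarrow> P' x" "\<forall>x\<in>set S. R x \<longrightarrow> P' x \<and> \<not> P x"
  shows "cnt P S + cnt R S \<le> cnt P' S"
  using assms by (induction S) (auto simp: cnt_def)

lemma cnt_mono:
  assumes "\<forall>x\<in>set S. P x \<longrightarrow> P' x"
  shows "cnt P S \<le> cnt P' S"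
  using cnt_add[of S P P' "\<lambda>_. False"] assms by (simp add: cnt_def)

lemma serr_cnt: "serr h X S = cnt (\<lambda>x. \<not> agrees h X x) S"
  unfolding serr_def cnt_def ..

lemma generr_frac: "generr n h X = fracs n (\<lambda>x. \<not> agrees h X x)"
  unfolding generr_def fracs_def ..

lemma generr_le:
  assumes invt: "invt b n t" and tg: "tgt b n h"
  shows "generr n h (Some t) \<le> 1 / 2 ^ length (lvs t)"
proof -
  have V: "set (lvs t) \<subseteq> {..<n}" using invt unfolding invt_def by auto
  have "generr n h (Some t) \<le> fracs n (\<lambda>x. x \<in> pat n (set (lvs t)) (\<lambda>_. b))"
    unfolding generr_frac
  proof (rule fracs_mono)
    fix x assume x: "x \<in> inputs n" "\<not> agrees h (Some t) x"
    have "evalgp t x = b" using err_sub[OF invt tg x(2)] by simp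
    then show "x \<in> pat n (set (lvs t)) (\<lambda>_. b)"
      using x(1) eval_allb[of t b x] invt unfolding invt_def pat_def by auto
  qed
  also have "\<dots> = 1 / 2 ^ card (set (lvs t))" by (rule pat_frac[OF V])
  also have "card (set (lvs t)) = length (lvs t)" using invt unfolding invt_def by (simp add: distinct_card)
  finally show ?thesis .
qed

definition Fo :: "nat \<Rightarrow> (bool list \<Rightarrow> bool) \<Rightarrow> real \<Rightarrow> gp \<Rightarrow> gp option \<Rightarrow> bool list list \<Rightarrow> gp option \<times> bool" where
  "Fo ell h thr t X' S = (if real (serr h (Some t) S) \<le> thr then (Some t, True)
      else (if leafcount X' \<le> ell \<and> serr h X' S \<le> serr h (Some t) S then X' else Some t, False))"

lemma step_eq:
  "rls_step n s ell h thr (Some t, False) = hvl n (Some t) \<bind> (\<lambda>X'. map_pmf (Fo ell h thr t X') (samples n s))"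
proof -
  have "rls_step n s ell h thr (Some t, False) = samples n s \<bind> (\<lambda>S. hvl n (Some t) \<bind> (\<lambda>X'. return_pmf (Fo ell h thr t X' S)))"
    unfolding rls_step_def Fo_def by (auto intro!: bind_pmf_cong)
  also have "\<dots> = hvl n (Some t) \<bind> (\<lambda>X'. samples n s \<bind> (\<lambda>S. return_pmf (Fo ell h thr t X' S)))"
    by (rule bind_commute_pmf)
  finally show ?thesis by (simp add: map_pmf_def)
qed

lemma step_prob:
  "measure_pmf.prob (rls_step n s ell h thr (Some t, False)) Q
   = measure_pmf.expectation (hvl n (Some t)) (\<lambda>X'. measure_pmf.prob (samples n s) {S. Fo ell h thr t X' S \<in> Q})"
  unfolding step_eq prob_bind by (simp add: vimage_def)

locale setting =
  fixes b :: bool and n s ell :: nat and h :: "bool list \<Rightarrow> bool" and thr gam rho :: real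
  assumes tg: "tgt b n h" and npos: "0 < n" and thr0: "0 \<le> thr"
    and hL: "exp (thr - real s * gam / 2) \<le> rho"
    and hU: "exp (- thr / 8) \<le> rho"
begin

definition Good :: "(gp option \<times> bool) set" where
  "Good = {(X, d). d \<and> generr n h X \<le> gam}"

definition Bk :: "nat \<Rightarrow> (gp option \<times> bool) set" where
  "Bk k = {(Some t', False) | t'. invt b n t' \<and> k \<le> length (lvs t')} \<union> Good"

lemma term_bad:
  assumes "gam < generr n h (Some t)"
  shows "measure_pmf.prob (samples n s) {S. real (serr h (Some t) S) \<le> thr} \<le> rho"
proof -
  have "measure_pmf.prob (samples n s) {S. real (serr h (Some t) S) \<le> thr}
     \<le> exp (thr - real s * generr n h (Some t) / 2)"
    unfolding serr_cnt generr_frac by (rule lower_tail)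
  also have "\<dots> \<le> exp (thr - real s * gam / 2)"
    using assms by (simp add: mult_left_mono)
  finally show ?thesis using hL by simp
qed

lemma term_good:
  assumes "real s * generr n h (Some t) \<le> thr / 4"
  shows "measure_pmf.prob (samples n s) {S. thr < real (serr h (Some t) S)} \<le> rho"
proof -
  have "measure_pmf.prob (samples n s) {S. thr < real (serr h (Some t) S)} \<le> exp (- thr / 2)"
    unfolding serr_cnt by (rule upper_tail) (use assms in \<open>simp add: generr_frac\<close>)
  also have "\<dots> \<le> exp (- thr / 8)" using thr0 by simp
  finally show ?thesis using hU by simp
qed

lemma bad_prob:
  assumes invt: "invt b n t" and bad: "badc n h t X'"
  shows "measure_pmf.prob (samples n s) {S. thr < real (serr h (Some t) S) \<and> serr h X' S \<le> serr h (Some t) S} \<le> rho"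
proof (cases "real s * generr n h (Some t) \<le> thr / 4")
  case True
  have "measure_pmf.prob (samples n s) {S. thr < real (serr h (Some t) S) \<and> serr h X' S \<le> serr h (Some t) S}
     \<le> measure_pmf.prob (samples n s) {S. thr < real (serr h (Some t) S)}"
    by (rule prob_mono_supp) auto
  also have "\<dots> \<le> rho" by (rule term_good[OF True])
  finally show ?thesis .
next
  case False
  from bad obtain W f where W: "W \<subseteq> {..<n}" "card W \<le> Suc (length (lvs t))"
    and pat: "\<And>x. (\<forall>i\<in>W. x ! i = f i) \<Longrightarrow> agrees h (Some t) x \<and> \<not> agrees h X' x"
    and sup: "\<And>x. \<not> agrees h (Some t) x \<Longrightarrow> \<not> agrees h X' x"
    unfolding badc_def by blast
  let ?R = "\<lambda>x. x \<in> pat n W f"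
  have "measure_pmf.prob (samples n s) {S. thr < real (serr h (Some t) S) \<and> serr h X' S \<le> serr h (Some t) S}
     \<le> measure_pmf.prob (samples n s) {S. cnt ?R S = 0}"
  proof (rule prob_mono_supp)
    fix S assume S: "S \<in> set_pmf (samples n s)"
      and "S \<in> {S. thr < real (serr h (Some t) S) \<and> serr h X' S \<le> serr h (Some t) S}"
    then have le: "serr h X' S \<le> serr h (Some t) S" by simp
    have "cnt (\<lambda>x. \<not> agrees h (Some t) x) S + cnt ?R S \<le> cnt (\<lambda>x. \<not> agrees h X' x) S"
      by (rule cnt_add) (use sup pat in \<open>auto simp: pat_def\<close>)
    then show "S \<in> {S. cnt ?R S = 0}" using le unfolding serr_cnt by simp
  qed
  also have "\<dots> \<le> exp (- real s * fracs n ?R)" by (rule zero_tail)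
  also have "\<dots> \<le> exp (- thr / 8)"
  proof -
    have fr: "fracs n ?R = 1 / 2 ^ card W" by (rule pat_frac[OF W(1)])
    have "(1::real) / 2 ^ Suc (length (lvs t)) \<le> 1 / 2 ^ card W"
      using W(2) by (intro divide_left_mono power_increasing) auto
    moreover have "generr n h (Some t) / 2 \<le> 1 / 2 ^ Suc (length (lvs t))"
      using generr_le[OF invt tg] by simp
    ultimately have "generr n h (Some t) / 2 \<le> fracs n ?R" using fr by linarith
    then have "real s * (generr n h (Some t) / 2) \<le> real s * fracs n ?R" by (intro mult_left_mono) auto
    then have "thr / 8 \<le> real s * fracs n ?R" using False by simp
    then show ?thesis by simp
  qed
  finally show ?thesis using hU by simp
qed

lemma phi_cls:
  assumes invt: "invt b n t" and X': "X' \<in> cls b n h t"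
  shows "1 - 2 * rho \<le> measure_pmf.prob (samples n s) {S. Fo ell h thr t X' S \<in> Bk (length (lvs t))}"
proof -
  let ?k = "length (lvs t)"
  define T1 where "T1 = (if gam < generr n h (Some t) then {S. real (serr h (Some t) S) \<le> thr} else {})"
  define T2 where "T2 = (if badc n h t X' then {S. thr < real (serr h (Some t) S) \<and> serr h X' S \<le> serr h (Some t) S} else {})"
  have p1: "measure_pmf.prob (samples n s) T1 \<le> rho"
    unfolding T1_def using term_bad[of t] hU by (auto simp: order_trans[OF _ hU])
  have p2: "measure_pmf.prob (samples n s) T2 \<le> rho"
    unfolding T2_def using bad_prob[OF invt] hU by (auto intro: order_trans[OF _ hU])
  have sub: "{S. Fo ell h thr t X' S \<notin> Bk ?k} \<subseteq> T1 \<union> T2"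
  proof
    fix S assume S: "S \<in> {S. Fo ell h thr t X' S \<notin> Bk ?k}"
    show "S \<in> T1 \<union> T2"
    proof (cases "real (serr h (Some t) S) \<le> thr")
      case True
      then have "generr n h (Some t) > gam" using S unfolding Fo_def Bk_def Good_def by auto
      then show ?thesis using True unfolding T1_def by auto
    next
      case False
      show ?thesis
      proof (cases "leafcount X' \<le> ell \<and> serr h X' S \<le> serr h (Some t) S")
        case acc: True
        then have FX: "Fo ell h thr t X' S = (X', False)" using False unfolding Fo_def by simp
        have "\<not> upc b n h t X'"
        proof
          assume "upc b n h t X'"
          then obtain t' where "X' = Some t'" "invt b n t'" "length (lvs t') = Suc ?k" unfolding upc_def by blast
          then have "(X', False) \<in> Bk ?k" unfolding Bk_def by auto
          then show False using S FX by simp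
        qed
        moreover have "\<not> neutc b n t X'"
        proof
          assume "neutc b n t X'"
          then obtain t' where "X' = Some t'" "invt b n t'" "length (lvs t') = ?k" unfolding neutc_def by blast
          then have "(X', False) \<in> Bk ?k" unfolding Bk_def by auto
          then show False using S FX by simp
        qed
        ultimately have "badc n h t X'" using X' unfolding cls_def by auto
        then show ?thesis using False acc unfolding T2_def by auto
      next
        case rej: False
        then have "Fo ell h thr t X' S = (Some t, False)" using False unfolding Fo_def by auto
        moreover have "(Some t, False) \<in> Bk ?k" using invt unfolding Bk_def by auto
        ultimately show ?thesis using S by simp
      qed
    qed
  qed
  have "measure_pmf.prob (samples n s) {S. Fo ell h thr t X' S \<notin> Bk ?k} \<le> measure_pmf.prob (samples n s) (T1 \<union> T2)"
    by (rule prob_mono_supp) (use sub in auto)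
  also have "\<dots> \<le> 2 * rho" using prob_union_le[of "samples n s" T1 T2] p1 p2 by simp
  finally show ?thesis using prob_compl_ge[of "samples n s" "\<lambda>S. Fo ell h thr t X' S \<in> Bk ?k"] by simp
qed

lemma phi_up:
  assumes invt: "invt b n t" and X': "upc b n h t X'" and ell: "Suc (length (lvs t)) \<le> ell"
  shows "1 - rho \<le> measure_pmf.prob (samples n s) {S. Fo ell h thr t X' S \<in> Bk (Suc (length (lvs t)))}"
proof -
  let ?k = "length (lvs t)"
  from X' obtain t' where t': "X' = Some t'" "invt b n t'" "length (lvs t') = Suc ?k"
    and sub: "\<And>x. \<not> agrees h X' x \<Longrightarrow> \<not> agrees h (Some t) x" unfolding upc_def by blast
  define T1 where "T1 = (if gam < generr n h (Some t) then {S. real (serr h (Some t) S) \<le> thr} else {})"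
  have p1: "measure_pmf.prob (samples n s) T1 \<le> rho"
    unfolding T1_def using term_bad[of t] hU by (auto simp: order_trans[OF _ hU])
  have "{S. Fo ell h thr t X' S \<notin> Bk (Suc ?k)} \<subseteq> T1"
  proof
    fix S assume S: "S \<in> {S. Fo ell h thr t X' S \<notin> Bk (Suc ?k)}"
    show "S \<in> T1"
    proof (cases "real (serr h (Some t) S) \<le> thr")
      case True
      then have "generr n h (Some t) > gam" using S unfolding Fo_def Bk_def Good_def by auto
      then show ?thesis using True unfolding T1_def by auto
    next
      case False
      have "serr h X' S \<le> serr h (Some t) S" unfolding serr_cnt by (rule cnt_mono) (use sub in auto)
      moreover have "leafcount X' \<le> ell" using t' ell unfolding leafcount_def by (simp add: leaves_lvs)
      ultimately have "Fo ell h thr t X' S = (X', False)" using False unfolding Fo_def by simp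
      moreover have "(X', False) \<in> Bk (Suc ?k)" using t' unfolding Bk_def by auto
      ultimately show ?thesis using S by simp
    qed
  qed
  then have "measure_pmf.prob (samples n s) {S. Fo ell h thr t X' S \<notin> Bk (Suc ?k)} \<le> measure_pmf.prob (samples n s) T1"
    by (intro prob_mono_supp) auto
  then show ?thesis using p1 prob_compl_ge[of "samples n s" "\<lambda>S. Fo ell h thr t X' S \<in> Bk (Suc ?k)"] by simp
qed

lemma rho_nonneg: "0 \<le> rho" using hU by (meson exp_ge_zero order_trans)

lemma step_B:
  assumes invt: "invt b n t"
  shows "1 - real (length (lvs t)) / real n - 2 * rho \<le> measure_pmf.prob (rls_step n s ell h thr (Some t, False)) (Bk (length (lvs t)))"
proof (cases "1 - 2 * rho \<le> 0")
  case True
  have "0 \<le> real (length (lvs t)) / real n" by simp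
  then have "1 - real (length (lvs t)) / real n - 2 * rho \<le> 0" using True by linarith
  then show ?thesis using measure_nonneg[of "measure_pmf (rls_step n s ell h thr (Some t, False))" "Bk (length (lvs t))"] by linarith
next
  case False
  let ?k = "length (lvs t)"
  have kn: "?k \<le> n"
  proof -
    have "card (set (lvs t)) \<le> card {..<n}" by (rule card_mono) (use invt in \<open>auto simp: invt_def\<close>)
    moreover have "card (set (lvs t)) = ?k" using invt unfolding invt_def by (simp add: distinct_card)
    ultimately show ?thesis by simp
  qed
  have "(1 - 2 * rho) * measure_pmf.prob (hvl n (Some t)) (cls b n h t)
     \<le> measure_pmf.expectation (hvl n (Some t)) (\<lambda>X'. measure_pmf.prob (samples n s) {S. Fo ell h thr t X' S \<in> Bk ?k})"
    by (rule lb_exp) (use phi_cls[OF invt] False in auto)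
  moreover have "(1 - 2 * rho) * (real (n - ?k) / real n) \<le> (1 - 2 * rho) * measure_pmf.prob (hvl n (Some t)) (cls b n h t)"
    using hvl_cls[OF invt tg npos] False by (intro mult_left_mono) auto
  moreover have "1 - real ?k / real n - 2 * rho \<le> (1 - 2 * rho) * (real (n - ?k) / real n)"
  proof -
    have eq: "real (n - ?k) / real n = 1 - real ?k / real n" using kn npos by (simp add: of_nat_diff field_simps)
    have "0 \<le> real ?k / real n" "real ?k / real n \<le> 1" using kn npos by auto
    moreover have "0 \<le> rho * (real ?k / real n)" using rho_nonneg by simp
    moreover have "(1 - 2 * rho) * (1 - real ?k / real n) = 1 - real ?k / real n - 2 * rho + 2 * (rho * (real ?k / real n))"
    proof -
      have "\<And>x::real. (1 - 2 * rho) * (1 - x) = 1 - x - 2 * rho + 2 * (rho * x)" by (simp add: algebra_simps)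
      then show ?thesis .
    qed
    ultimately show ?thesis unfolding eq by linarith
  qed
  ultimately show ?thesis unfolding step_prob by linarith
qed

lemma step_A:
  assumes invt: "invt b n t" and ell: "Suc (length (lvs t)) \<le> ell" and r1: "rho \<le> 1"
  shows "(1 - rho) * (real (n - length (lvs t)) / (6 * real n)) \<le> measure_pmf.prob (rls_step n s ell h thr (Some t, False)) (Bk (Suc (length (lvs t))))"
proof -
  let ?k = "length (lvs t)"
  have "(1 - rho) * measure_pmf.prob (hvl n (Some t)) {X'. upc b n h t X'}
     \<le> measure_pmf.expectation (hvl n (Some t)) (\<lambda>X'. measure_pmf.prob (samples n s) {S. Fo ell h thr t X' S \<in> Bk (Suc ?k)})"
    by (rule lb_exp) (use phi_up[OF invt _ ell] r1 in auto)
  moreover have "(1 - rho) * (real (n - ?k) / (6 * real n)) \<le> (1 - rho) * measure_pmf.prob (hvl n (Some t)) {X'. upc b n h t X'}"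
    using hvl_up[OF invt tg npos] r1 by (intro mult_left_mono) auto
  ultimately show ?thesis unfolding step_prob by linarith
qed

lemma step_fin:
  assumes invt: "invt b n t" and k1: "real s * (1 / 2 ^ length (lvs t)) \<le> thr / 4" and k2: "1 / 2 ^ length (lvs t) \<le> gam"
  shows "1 - rho \<le> measure_pmf.prob (rls_step n s ell h thr (Some t, False)) Good"
proof -
  have ge: "generr n h (Some t) \<le> 1 / 2 ^ length (lvs t)" by (rule generr_le[OF invt tg])
  have ph: "1 - rho \<le> measure_pmf.prob (samples n s) {S. Fo ell h thr t X' S \<in> Good}" for X'
  proof -
    have "real s * generr n h (Some t) \<le> thr / 4"
      using k1 ge by (meson mult_left_mono of_nat_0_le_iff order_trans)
    then have tg': "measure_pmf.prob (samples n s) {S. thr < real (serr h (Some t) S)} \<le> rho" by (rule term_good)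
    have "measure_pmf.prob (samples n s) {S. Fo ell h thr t X' S \<notin> Good} \<le>
        measure_pmf.prob (samples n s) {S. thr < real (serr h (Some t) S)}"
    proof (rule prob_mono_supp)
      fix S assume "S \<in> {S. Fo ell h thr t X' S \<notin> Good}"
      moreover have "generr n h (Some t) \<le> gam" using ge k2 by linarith
      ultimately show "S \<in> {S. thr < real (serr h (Some t) S)}"
        unfolding Fo_def Good_def by (cases "real (serr h (Some t) S) \<le> thr") auto
    qed
    then have "measure_pmf.prob (samples n s) {S. Fo ell h thr t X' S \<notin> Good} \<le> rho"
      using tg' by linarith
    then show ?thesis using prob_compl_ge[of "samples n s" "\<lambda>S. Fo ell h thr t X' S \<in> Good"] by simp
  qed
  have "(1 - rho) * measure_pmf.prob (hvl n (Some t)) UNIV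
     \<le> measure_pmf.expectation (hvl n (Some t)) (\<lambda>X'. measure_pmf.prob (samples n s) {S. Fo ell h thr t X' S \<in> Good})"
  proof (cases "rho \<le> 1")
    case True
    then show ?thesis by (intro lb_exp) (use ph in auto)
  next
    case False
    have "0 \<le> measure_pmf.expectation (hvl n (Some t)) (\<lambda>X'. measure_pmf.prob (samples n s) {S. Fo ell h thr t X' S \<in> Good})"
      by (rule integral_nonneg_AE) simp
    moreover have "(1 - rho) * measure_pmf.prob (hvl n (Some t)) UNIV \<le> 0"
      using False by (simp add: mult_nonpos_nonneg)
    ultimately show ?thesis by linarith
  qed
  then show ?thesis unfolding step_prob by simp
qed

end


fun itr :: "nat \<Rightarrow> nat \<Rightarrow> nat \<Rightarrow> (bool list \<Rightarrow> bool) \<Rightarrow> real \<Rightarrow> nat \<Rightarrow> gp option \<times> bool \<Rightarrow> (gp option \<times> bool) pmf" where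
  "itr n s ell h thr 0 x = return_pmf x"
| "itr n s ell h thr (Suc t) x = rls_step n s ell h thr x \<bind> itr n s ell h thr t"

lemma itr_0: "itr n s ell h thr 0 = return_pmf"
  by (rule ext) simp

lemma itr_Suc': "itr n s ell h thr (Suc t) x = itr n s ell h thr t x \<bind> rls_step n s ell h thr"
proof (induction t arbitrary: x)
  case 0
  have "itr n s ell h thr (Suc 0) x = rls_step n s ell h thr x"
    by (simp only: itr.simps(2) itr_0 bind_return_pmf')
  then show ?case by (simp add: bind_return_pmf)
next
  case (Suc t)
  have e: "itr n s ell h thr (Suc t) = (\<lambda>y. itr n s ell h thr t y \<bind> rls_step n s ell h thr)"
    by (intro ext) (rule Suc.IH)
  have "itr n s ell h thr (Suc (Suc t)) x = rls_step n s ell h thr x \<bind> itr n s ell h thr (Suc t)"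
    by (simp only: itr.simps(2))
  also have "\<dots> = rls_step n s ell h thr x \<bind> (\<lambda>y. itr n s ell h thr t y \<bind> rls_step n s ell h thr)"
    by (simp only: e)
  also have "\<dots> = itr n s ell h thr (Suc t) x \<bind> rls_step n s ell h thr"
    by (simp add: bind_assoc_pmf)
  finally show ?case .
qed

lemma run_itr: "rls_run n s ell h thr T = itr n s ell h thr T (None, False)"
proof (induction T)
  case (Suc T)
  then show ?case using itr_Suc'[of n s ell h thr T "(None, False)"] by simp
qed simp

lemma step_done: "rls_step n s ell h thr (X, True) = return_pmf (X, True)"
  unfolding rls_step_def by simp

lemma itr_done: "itr n s ell h thr t (X, True) = return_pmf (X, True)"
  by (induction t) (simp_all add: step_done bind_return_pmf)

context setting
begin

lemma good_abs: "x \<in> Good \<Longrightarrow> measure_pmf.prob (itr n s ell h thr t x) Good = 1"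
proof -
  assume x: "x \<in> Good"
  then obtain X where "x = (X, True)" unfolding Good_def by auto
  then show ?thesis using x by (simp add: itr_done)
qed

lemma lin_lb:
  fixes g :: "'a \<Rightarrow> real"
  assumes "A \<subseteq> B" "\<And>y. y \<in> set_pmf M \<Longrightarrow> y \<in> A \<Longrightarrow> a1 \<le> g y"
    "\<And>y. y \<in> set_pmf M \<Longrightarrow> y \<in> B \<Longrightarrow> a0 \<le> g y" "\<And>y. 0 \<le> g y" "\<And>y. g y \<le> 1"
  shows "a0 * measure_pmf.prob M B + (a1 - a0) * measure_pmf.prob M A \<le> measure_pmf.expectation M g"
proof -
  have "a0 * measure_pmf.prob M B + (a1 - a0) * measure_pmf.prob M A
     = measure_pmf.expectation M (\<lambda>y. a0 * indicator B y + (a1 - a0) * indicator A y)"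
  proof -
    have iA: "integrable (measure_pmf M) (\<lambda>y. indicator A y :: real)"
      by (rule measure_pmf.integrable_const_bound[where B=1]) (auto split: split_indicator)
    have iB: "integrable (measure_pmf M) (\<lambda>y. indicator B y :: real)"
      by (rule measure_pmf.integrable_const_bound[where B=1]) (auto split: split_indicator)
    show ?thesis
      by (subst Bochner_Integration.integral_add) (use iA iB in auto)
  qed
  also have "\<dots> \<le> measure_pmf.expectation M g"
  proof (rule integral_mono_AE)
    have iA: "integrable (measure_pmf M) (\<lambda>y. indicator A y :: real)"
      by (rule measure_pmf.integrable_const_bound[where B=1]) (auto split: split_indicator)
    have iB: "integrable (measure_pmf M) (\<lambda>y. indicator B y :: real)"
      by (rule measure_pmf.integrable_const_bound[where B=1]) (auto split: split_indicator)
    show "integrable (measure_pmf M) (\<lambda>y. a0 * indicator B y + (a1 - a0) * indicator A y)"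
      using iA iB by auto
    show "integrable (measure_pmf M) g"
      by (rule measure_pmf.integrable_const_bound[where B=1]) (use assms(4,5) in auto)
    show "AE y in measure_pmf M. a0 * indicator B y + (a1 - a0) * indicator A y \<le> g y"
      unfolding AE_measure_pmf_iff
    proof
      fix y assume y: "y \<in> set_pmf M"
      show "a0 * indicator B y + (a1 - a0) * indicator A y \<le> g y"
        using assms(1) assms(2,3)[OF y] assms(4)[of y] by (auto split: split_indicator)
    qed
  qed
  finally show ?thesis .
qed

definition Lb :: "nat \<Rightarrow> real \<Rightarrow> real \<Rightarrow> nat \<Rightarrow> nat \<Rightarrow> real" where
  "Lb K dl p t k = 1 - real t * dl - 2 ^ (K - k) * (1 - p / 2) ^ t"

lemma Lb_mono: "k \<le> j \<Longrightarrow> 0 \<le> p \<Longrightarrow> p \<le> 2 \<Longrightarrow> Lb K dl p t k \<le> Lb K dl p t j"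
  unfolding Lb_def by (intro diff_mono order_refl mult_right_mono power_increasing) auto

lemma main_ind:
  assumes dl: "\<And>k. k < K \<Longrightarrow> real k / real n + 2 * rho \<le> dl"
    and pA: "\<And>k. k < K \<Longrightarrow> p \<le> (1 - rho) * (real (n - k) / (6 * real n))"
    and ellK: "K \<le> ell"
    and finK: "\<And>k. K \<le> k \<Longrightarrow> real s * (1 / 2 ^ k) \<le> thr / 4 \<and> 1 / 2 ^ k \<le> gam"
    and rd: "rho \<le> dl" and r1: "rho \<le> 1" and p0: "0 \<le> p" and p1: "p \<le> 1"
  shows "invt b n t0 \<Longrightarrow> Lb K dl p t (length (lvs t0)) \<le> measure_pmf.prob (itr n s ell h thr t (Some t0, False)) Good"
proof (induction t arbitrary: t0)
  case 0
  have "Lb K dl p 0 (length (lvs t0)) \<le> 0"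
    unfolding Lb_def by simp
  then show ?case using measure_nonneg[of "measure_pmf (itr n s ell h thr 0 (Some t0, False))" Good] by linarith
next
  case (Suc t)
  let ?k = "length (lvs t0)"
  let ?g = "\<lambda>y. measure_pmf.prob (itr n s ell h thr t y) Good"
  have eq: "measure_pmf.prob (itr n s ell h thr (Suc t) (Some t0, False)) Good
      = measure_pmf.expectation (rls_step n s ell h thr (Some t0, False)) ?g"
    by (simp add: prob_bind)
  have dl0: "0 \<le> dl" using rd rho_nonneg by linarith
  have gB: "Lb K dl p t j \<le> ?g y" if yB: "y \<in> Bk j" for y j
  proof (cases "y \<in> Good")
    case True
    have "0 \<le> (2::real) ^ (K - j) * (1 - p / 2) ^ t" using p1 by simp
    moreover have "0 \<le> real t * dl" using dl0 by simp
    ultimately have "Lb K dl p t j \<le> 1" unfolding Lb_def by linarith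
    then show ?thesis using good_abs[OF True] by simp
  next
    case False
    then obtain t' where "y = (Some t', False)" "invt b n t'" "j \<le> length (lvs t')"
      using yB False unfolding Bk_def by blast
    then show ?thesis using Suc.IH[of t'] Lb_mono[of j "length (lvs t')" p K dl t] p0 p1 by simp
  qed
  show ?case
  proof (cases "K \<le> ?k")
    case True
    have st: "1 - rho \<le> measure_pmf.prob (rls_step n s ell h thr (Some t0, False)) Good"
      using step_fin[OF Suc.prems] finK[OF True] by blast
    have "1 * measure_pmf.prob (rls_step n s ell h thr (Some t0, False)) Good \<le> measure_pmf.expectation (rls_step n s ell h thr (Some t0, False)) ?g"
      by (rule lb_exp) (use good_abs in auto)
    moreover have "Lb K dl p (Suc t) ?k \<le> 1 - rho"
    proof -
      have "0 \<le> (1 - p / 2) ^ Suc t" using p1 by simp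
      moreover have "rho \<le> real (Suc t) * dl"
      proof -
        have "0 \<le> dl * real t" using dl0 by simp
        then show ?thesis using rd by (simp add: algebra_simps)
      qed
      ultimately show ?thesis unfolding Lb_def using True by simp
    qed
    ultimately show ?thesis using st eq by linarith
  next
    case False
    then have kK: "?k < K" by simp
    let ?a0 = "Lb K dl p t ?k" and ?a1 = "Lb K dl p t (Suc ?k)"
    have ell': "Suc ?k \<le> ell" using kK ellK by simp
    have PB: "1 - dl \<le> measure_pmf.prob (rls_step n s ell h thr (Some t0, False)) (Bk ?k)"
      using step_B[OF Suc.prems] dl[OF kK] by linarith
    have PA: "p \<le> measure_pmf.prob (rls_step n s ell h thr (Some t0, False)) (Bk (Suc ?k))"
      using step_A[OF Suc.prems ell' r1] pA[OF kK] by linarith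
    have sub: "Bk (Suc ?k) \<subseteq> Bk ?k" unfolding Bk_def by auto
    have lin: "?a0 * measure_pmf.prob (rls_step n s ell h thr (Some t0, False)) (Bk ?k)
        + (?a1 - ?a0) * measure_pmf.prob (rls_step n s ell h thr (Some t0, False)) (Bk (Suc ?k))
        \<le> measure_pmf.expectation (rls_step n s ell h thr (Some t0, False)) ?g"
      by (rule lin_lb[OF sub]) (use gB in auto)
    have d: "?a1 - ?a0 = 2 ^ (K - Suc ?k) * (1 - p / 2) ^ t"
    proof -
      have "(2::real) ^ (K - ?k) = 2 * 2 ^ (K - Suc ?k)" using kK
        by (metis Suc_diff_Suc power_Suc)
      then show ?thesis unfolding Lb_def by (simp add: algebra_simps)
    qed
    have d0: "0 \<le> ?a1 - ?a0" unfolding d using p1 by simp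
    have a0le: "?a0 \<le> 1"
    proof -
      have "0 \<le> (2::real) ^ (K - ?k) * (1 - p / 2) ^ t" using p1 by simp
      moreover have "0 \<le> real t * dl" using dl0 by simp
      ultimately show ?thesis unfolding Lb_def by linarith
    qed
    have t1: "?a0 - dl \<le> ?a0 * measure_pmf.prob (rls_step n s ell h thr (Some t0, False)) (Bk ?k)"
    proof (cases "0 \<le> ?a0")
      case True
      have "?a0 * (1 - dl) \<le> ?a0 * measure_pmf.prob (rls_step n s ell h thr (Some t0, False)) (Bk ?k)"
        using PB True by (intro mult_left_mono) auto
      moreover have "?a0 - dl \<le> ?a0 * (1 - dl)" using a0le dl0 True
        by (simp add: algebra_simps) (metis mult_left_le_one_le mult.commute)
      ultimately show ?thesis by linarith
    next
      case False
      have "?a0 * 1 \<le> ?a0 * measure_pmf.prob (rls_step n s ell h thr (Some t0, False)) (Bk ?k)"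
        using False by (intro mult_left_mono_neg) auto
      then show ?thesis using dl0 by simp
    qed
    have t2: "(?a1 - ?a0) * p \<le> (?a1 - ?a0) * measure_pmf.prob (rls_step n s ell h thr (Some t0, False)) (Bk (Suc ?k))"
      using PA d0 by (intro mult_left_mono) auto
    have fin: "Lb K dl p (Suc t) ?k = ?a0 - dl + (?a1 - ?a0) * p"
    proof -
      have "(2::real) ^ (K - ?k) = 2 * 2 ^ (K - Suc ?k)" using kK
        by (metis Suc_diff_Suc power_Suc)
      then show ?thesis unfolding d unfolding Lb_def by (simp add: algebra_simps)
    qed
    show ?thesis using eq lin t1 t2 fin by linarith
  qed
qed

end


lemma serr_None: "serr h None S = length S"
  unfolding serr_def agrees_def by simp

lemma serr_le: "serr h X S \<le> length S"
  unfolding serr_def by simp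

lemma init_set:
  assumes "thr < real s" "1 \<le> ell" "0 < n" "y \<in> set_pmf (rls_step n s ell h thr (None, False))"
  shows "\<exists>l<n. y = (Some (Lf l), False)"
proof -
  from assms(4) obtain S where S: "S \<in> set_pmf (samples n s)"
    and y: "y \<in> set_pmf (if real (serr h None S) \<le> thr then return_pmf (None, True)
       else hvl n None \<bind> (\<lambda>X'. return_pmf (if leafcount X' \<le> ell \<and> serr h X' S \<le> serr h None S then X' else None, False)))"
    unfolding rls_step_def by auto
  have ls: "length S = s" using samples_set[OF S] by simp
  have nt: "\<not> real (serr h None S) \<le> thr" using assms(1) ls serr_None[of h S] by simp
  from y nt obtain X' where X': "X' \<in> set_pmf (hvl n None)"
    and y2: "y = (if leafcount X' \<le> ell \<and> serr h X' S \<le> serr h None S then X' else None, False)" by auto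
  from X' obtain l where l: "l < n" "X' = Some (Lf l)" unfolding hvl_def using assms(3) by auto
  have "leafcount X' \<le> ell" using l assms(2) unfolding leafcount_def by simp
  moreover have "serr h X' S \<le> serr h None S" using serr_le[of h X' S] serr_None[of h S] by simp
  ultimately show ?thesis using y2 l by auto
qed

context setting
begin

lemma run_bound:
  assumes dl: "\<And>k. k < K \<Longrightarrow> real k / real n + 2 * rho \<le> dl"
    and pA: "\<And>k. k < K \<Longrightarrow> p \<le> (1 - rho) * (real (n - k) / (6 * real n))"
    and ellK: "K \<le> ell" and ell1: "1 \<le> ell"
    and finK: "\<And>k. K \<le> k \<Longrightarrow> real s * (1 / 2 ^ k) \<le> thr / 4 \<and> 1 / 2 ^ k \<le> gam"
    and rd: "rho \<le> dl" and r1: "rho \<le> 1" and p0: "0 \<le> p" and p1: "p \<le> 1"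
    and st: "thr < real s"
  shows "Lb K dl p T 1 \<le> measure_pmf.prob (rls_run n s ell h thr (Suc T)) Good"
proof -
  let ?g = "\<lambda>y. measure_pmf.prob (itr n s ell h thr T y) Good"
  have eq: "measure_pmf.prob (rls_run n s ell h thr (Suc T)) Good
      = measure_pmf.expectation (rls_step n s ell h thr (None, False)) ?g"
    unfolding run_itr by (simp add: prob_bind)
  have gy: "Lb K dl p T 1 \<le> ?g y" if yS: "y \<in> set_pmf (rls_step n s ell h thr (None, False))" for y
  proof -
    obtain l where l: "l < n" "y = (Some (Lf l), False)" using init_set[OF st ell1 npos yS] by blast
    have "invt b n (Lf l)" unfolding invt_def using l by simp
    from main_ind[OF dl pA ellK finK rd r1 p0 p1 this, of T] show ?thesis using l by simp
  qed
  show ?thesis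
  proof (cases "0 \<le> Lb K dl p T 1")
    case True
    have "Lb K dl p T 1 \<le> 1" unfolding Lb_def
    proof -
      have "0 \<le> (2::real) ^ (K - 1) * (1 - p / 2) ^ T" using p1 by simp
      moreover have "0 \<le> real T * dl" using rd rho_nonneg by simp
      ultimately show "1 - real T * dl - 2 ^ (K - 1) * (1 - p / 2) ^ T \<le> 1" by linarith
    qed
    then have "Lb K dl p T 1 * measure_pmf.prob (rls_step n s ell h thr (None, False)) UNIV
        \<le> measure_pmf.expectation (rls_step n s ell h thr (None, False)) ?g"
      by (intro lb_exp) (use gy True in auto)
    then show ?thesis using eq by simp
  next
    case False
    have "0 \<le> measure_pmf.expectation (rls_step n s ell h thr (None, False)) ?g"
      by (rule integral_nonneg_AE) simp
    then show ?thesis using eq False by linarith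
  qed
qed

end


lemma nat_ceil_bounds:
  assumes "0 \<le> (y::real)"
  shows "y \<le> real (nat \<lceil>y\<rceil>)" "real (nat \<lceil>y\<rceil>) < y + 1"
proof -
  have e: "real (nat \<lceil>y\<rceil>) = real_of_int \<lceil>y\<rceil>" using assms by simp
  show "y \<le> real (nat \<lceil>y\<rceil>)" using e ceiling_correct[of y] by linarith
  show "real (nat \<lceil>y\<rceil>) < y + 1" using e ceiling_correct[of y] by linarith
qed

lemma ln2_ge_half: "1/2 \<le> ln (2::real)"
proof -
  have "exp (1/2::real) * exp (1/2) = exp 1" by (simp add: exp_add[symmetric])
  also have "\<dots> \<le> 3" using exp_le by simp
  finally have "exp (1/2::real) ^ 2 < 2 ^ 2" by (simp add: power2_eq_square)
  then have "exp (1/2::real) < 2" by (rule power_less_imp_less_base) simp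
  then have "ln (exp (1/2::real)) < ln 2" by (subst ln_less_cancel_iff) auto
  then show ?thesis by simp
qed

lemma F1: assumes "2 ^ 36 \<le> (n::nat)" shows "36 \<le> log 2 (real n)"
proof -
  have "log 2 ((2::real) ^ 36) \<le> log 2 (real n)"
  proof (rule log_mono)
    have "real (2 ^ 36) \<le> real n" using assms by (simp only: of_nat_le_iff)
    then show "(2::real) ^ 36 \<le> real n" by simp
  qed auto
  moreover have "log 2 ((2::real) ^ 36) = 36" by (subst log_nat_power) simp_all
  ultimately show ?thesis by simp
qed

lemma F2: assumes "1 \<le> (n::nat)" shows "log 2 (real n) \<le> 4 * sqrt (real n)"
proof -
  have sp: "0 < sqrt (real n)" using assms by simp
  have "ln (real n) = 2 * ln (sqrt (real n))" using ln_sqrt[of "real n"] by simp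
  also have "\<dots> \<le> 2 * (sqrt (real n) - 1)" using ln_le_minus_one[OF sp] by simp
  finally have ln: "ln (real n) \<le> 2 * sqrt (real n)" by simp
  have l0: "0 \<le> ln (real n)" using assms by simp
  have "log 2 (real n) = ln (real n) / ln 2" by (simp add: log_def)
  also have "\<dots> \<le> ln (real n) / (1/2)" using ln2_ge_half l0 by (intro divide_left_mono) auto
  also have "\<dots> \<le> 4 * sqrt (real n)" using ln by simp
  finally show ?thesis .
qed

lemma F4:
  assumes c: "0 < c" and n1: "1 \<le> (n::nat)" and sq: "28 * (4 * c + 5) \<le> sqrt (real n)"
  shows "(c + 1) * log 2 (real n) + 1 \<le> real n / 28"
proof -
  have s1: "1 \<le> sqrt (real n)" using n1 by simp
  have "(c + 1) * log 2 (real n) \<le> (c + 1) * (4 * sqrt (real n))"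
    using F2[OF n1] c by (intro mult_left_mono) auto
  then have "(c + 1) * log 2 (real n) + 1 \<le> (c + 1) * (4 * sqrt (real n)) + sqrt (real n)" using s1 by linarith
  also have "\<dots> = (4 * c + 5) * sqrt (real n)" by (simp add: algebra_simps)
  also have "\<dots> \<le> (sqrt (real n) / 28) * sqrt (real n)"
    using sq by (intro mult_right_mono) auto
  also have "\<dots> = real n / 28" by (simp add: power2_eq_square[symmetric])
  finally show ?thesis .
qed

lemma two_powr_L: "1 \<le> (n::nat) \<Longrightarrow> 2 powr (x * log 2 (real n)) = real n powr x"
proof -
  assume n: "1 \<le> n"
  have "2 powr (x * log 2 (real n)) = (2 powr (log 2 (real n))) powr x" by (simp add: powr_powr mult.commute)
  also have "\<dots> = real n powr x" using n by simp
  finally show ?thesis .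
qed

lemma exp_neg_L: "1 \<le> (n::nat) \<Longrightarrow> exp (- 2 * log 2 (real n)) \<le> 1 / real n"
proof -
  assume n: "1 \<le> n"
  have l0: "0 \<le> log 2 (real n)" using n by simp
  have "ln (real n) = log 2 (real n) * ln 2" by (simp add: log_def)
  also have "\<dots> \<le> log 2 (real n) * 2" using l0 ln_2_less_1 by (intro mult_left_mono) auto
  finally have "- 2 * log 2 (real n) \<le> - ln (real n)" by simp
  then have "exp (- 2 * log 2 (real n)) \<le> exp (- ln (real n))" by simp
  also have "\<dots> = 1 / real n" using n by (simp add: exp_minus inverse_eq_divide)
  finally show ?thesis .
qed

lemma pow1314: "(13/14::real) ^ 10 \<le> 1/2" by (simp add: power_divide)

lemma half_powr: "(1/2::real) powr x = 2 powr (- x)"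
proof -
  have "(1/2::real) powr x = 1 powr x / 2 powr x" by (rule powr_divide)
  also have "\<dots> = 2 powr (- x)" by (simp add: powr_minus inverse_eq_divide)
  finally show ?thesis .
qed

lemma R6:
  fixes c :: real and n K T :: nat
  assumes c: "0 < c" and n1: "1 \<le> n" and L1: "1 \<le> log 2 (real n)"
    and K: "real K \<le> (c + 1) * log 2 (real n) + 1" "1 \<le> K"
    and T: "10 * (c + 2) * log 2 (real n) - 1 \<le> real T"
  shows "2 ^ (K - 1) * (13/14::real) ^ T \<le> 3 / real n"
proof -
  define L where "L = log 2 (real n)"
  have K': "real (K - 1) \<le> (c + 1) * L" using K unfolding L_def by (simp add: of_nat_diff)
  have T': "10 * ((c + 2) * L) - 1 \<le> real T"
  proof -
    have "10 * ((c + 2) * L) = 10 * (c + 2) * L" by (simp only: mult.assoc)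
    then show ?thesis using T unfolding L_def by linarith
  qed
  have a1: "(2::real) ^ (K - 1) = 2 powr real (K - 1)" by (rule powr_realpow[symmetric]) simp
  have a2: "(2::real) powr real (K - 1) \<le> 2 powr ((c + 1) * L)" by (rule powr_mono[OF K']) simp
  have a3: "(2::real) powr ((c + 1) * L) = real n powr (c + 1)" unfolding L_def by (rule two_powr_L[OF n1])
  have a: "(2::real) ^ (K - 1) \<le> real n powr (c + 1)" using a1 a2 a3 by simp
  have b1: "(13/14::real) ^ T = (13/14) powr real T" by (rule powr_realpow[symmetric]) simp
  have b2: "(13/14::real) powr real T \<le> (13/14) powr (10 * ((c + 2) * L) - 1)" by (rule powr_mono'[OF T']) auto
  have b3: "(13/14::real) powr (10 * ((c + 2) * L) - 1) = (13/14) powr (10 * ((c + 2) * L)) / (13/14) powr 1"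
    by (rule powr_diff)
  have b4: "(13/14::real) powr (10 * ((c + 2) * L)) = ((13/14) powr 10) powr ((c + 2) * L)"
    by (rule powr_powr[symmetric])
  have b5: "(13/14::real) powr 10 = (13/14) ^ 10" by (rule powr_numeral) simp
  have cL: "0 \<le> (c + 2) * L" using c L1 unfolding L_def by simp
  have b6: "((13/14::real) ^ 10) powr ((c + 2) * L) \<le> (1/2) powr ((c + 2) * L)"
    by (rule powr_mono2[OF cL]) (use pow1314 in auto)
  have b7: "(1/2::real) powr ((c + 2) * L) = real n powr (- (c + 2))"
  proof -
    have "(1/2::real) powr ((c + 2) * L) = 2 powr (- ((c + 2) * L))" by (rule half_powr)
    also have "\<dots> = 2 powr ((- (c + 2)) * L)" by (simp only: minus_mult_left)
    also have "\<dots> = real n powr (- (c + 2))" unfolding L_def by (rule two_powr_L[OF n1])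
    finally show ?thesis .
  qed
  have b: "(13/14::real) ^ T \<le> (14/13) * real n powr (- (c + 2))"
  proof -
    have "(13/14::real) ^ T \<le> (13/14) powr (10 * ((c + 2) * L)) / (13/14)" using b1 b2 b3 by simp
    also have "\<dots> = (14/13) * ((13/14) ^ 10) powr ((c + 2) * L)" using b4 b5 by simp
    also have "\<dots> \<le> (14/13) * real n powr (- (c + 2))" using b6 b7 by simp
    finally show ?thesis .
  qed
  have m: "2 ^ (K - 1) * (13/14::real) ^ T \<le> real n powr (c + 1) * ((14/13) * real n powr (- (c + 2)))"
  proof (rule mult_mono[OF a b])
    show "0 \<le> real n powr (c + 1)" by simp
    show "0 \<le> (13/14::real) ^ T" by simp
  qed
  have e1: "real n powr (c + 1) * real n powr (- (c + 2)) = real n powr ((c + 1) + (- (c + 2)))"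
    by (rule powr_add[symmetric])
  have e2: "(c + 1) + (- (c + 2)) = (-1::real)" by simp
  have e3: "real n powr (-1::real) = 1 / real n"
    using n1 by (simp add: powr_minus inverse_eq_divide)
  have "real n powr (c + 1) * ((14/13) * real n powr (- (c + 2))) = (14/13) * (real n powr (c + 1) * real n powr (- (c + 2)))"
    by (simp only: mult_ac)
  also have "\<dots> = (14/13) / real n" unfolding e1 e2 e3 by simp
  also have "\<dots> \<le> 3 / real n" using n1 by (intro divide_right_mono) auto
  finally show ?thesis using m by linarith
qed


lemma tgt_AND: "tgt True n (ANDn n)" unfolding tgt_def ANDn_def by simp
lemma tgt_OR: "tgt False n (ORn n)" unfolding tgt_def ORn_def by simp

lemma final_bound:
  fixes c :: real
  assumes c: "0 < c" and n36: "2 ^ 36 \<le> n" and sq: "28 * (4 * c + 5) \<le> sqrt (real n)"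
    and ell: "n \<le> ell" and tg: "tgt b n h"
  shows "1 - (10 * (c + 2) * (c + 4) + 3) * (log 2 (real n))\<^sup>2 / real n
    \<le> measure_pmf.prob (rls_run n (ssize c n) ell h (16 * log 2 (real n)) (nat \<lceil>10 * (c + 2) * log 2 (real n)\<rceil>))
       {(X, d). d \<and> generr n h X \<le> real n powr (- c)}"
proof -
  define L where "L = log 2 (real n)"
  define s where "s = ssize c n"
  define thr where "thr = 16 * L"
  define gam where "gam = real n powr (- c)"
  define rho where "rho = exp (- 2 * L)"
  define K where "K = nat \<lceil>(c + 1) * L\<rceil>"
  define dl where "dl = (real K + 2) / real n"
  define p where "p = (1/7::real)"
  have n1: "1 \<le> n" using n36 by simp
  have nr: "(2::real) ^ 36 \<le> real n"
  proof -
    have "real (2 ^ 36) \<le> real n" using n36 by (simp only: of_nat_le_iff)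
    then show ?thesis by simp
  qed
  have L36: "36 \<le> L" unfolding L_def by (rule F1[OF n36])
  have L4: "L \<le> 4 * sqrt (real n)" unfolding L_def by (rule F2[OF n1])
  have sq4: "4 \<le> sqrt (real n)"
  proof -
    have "4 \<le> 28 * (4 * c + 5)" using c by (simp add: algebra_simps)
    then show ?thesis using sq by linarith
  qed
  have Ln: "L \<le> real n"
  proof -
    have "4 * sqrt (real n) \<le> sqrt (real n) * sqrt (real n)" using sq4 by (intro mult_right_mono) auto
    also have "\<dots> = real n" by simp
    finally show ?thesis using L4 by linarith
  qed
  have F4': "(c + 1) * L + 1 \<le> real n / 28" unfolding L_def by (rule F4[OF c n1 sq])
  have nc1: "1 \<le> real n powr c" using n1 c by (simp add: ge_one_powr_ge_zero)
  define x where "x = real n powr c * L\<^sup>2"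
  have x0: "0 \<le> x" unfolding x_def by simp
  have sx: "x \<le> real s" "real s \<le> x + 1"
  proof -
    have se: "s = nat \<lceil>x\<rceil>" unfolding s_def ssize_def x_def L_def ..
    show "x \<le> real s" unfolding se by (rule nat_ceil_bounds(1)[OF x0])
    show "real s \<le> x + 1" unfolding se using nat_ceil_bounds(2)[OF x0] by linarith
  qed
  have L2x: "L\<^sup>2 \<le> x" unfolding x_def using mult_right_mono[OF nc1, of "L\<^sup>2"] by simp
  have sgam: "L\<^sup>2 \<le> real s * gam"
  proof -
    have "x * gam = L\<^sup>2" unfolding x_def gam_def using n1
      by (simp add: powr_minus field_simps)
    moreover have "x * gam \<le> real s * gam" using sx(1) unfolding gam_def by (intro mult_right_mono) auto
    ultimately show ?thesis by simp
  qed
  have rho_n: "rho \<le> 1 / real n" unfolding rho_def L_def by (rule exp_neg_L[OF n1])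
  have n28: "28 \<le> real n" using nr by simp
  have rho28: "rho \<le> 1/28"
  proof -
    have "1 / real n \<le> 1 / 28" using n28 by (intro divide_left_mono) auto
    then show ?thesis using rho_n by linarith
  qed
  have rho0: "0 \<le> rho" unfolding rho_def by simp
  have cL0: "0 \<le> (c + 1) * L" using c L36 by simp
  have K1: "(c + 1) * L \<le> real K" "real K \<le> (c + 1) * L + 1"
    unfolding K_def using nat_ceil_bounds[OF cL0] by linarith+
  have Kge1: "1 \<le> K"
  proof -
    have "0 < (c + 1) * L" using c L36 by simp
    then show ?thesis using K1(1) by linarith
  qed
  have Kn28: "real K \<le> real n / 28" using K1(2) F4' by linarith
  have Kn: "K \<le> n" using Kn28 n28 by linarith
  interpret S: setting b n s ell h thr gam rho
  proof
    show "tgt b n h" by (rule tg)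
    show "0 < n" using n1 by simp
    show "0 \<le> thr" unfolding thr_def using L36 by simp
    show "exp (thr - real s * gam / 2) \<le> rho"
    proof -
      have "36 * L \<le> L * L" using L36 by (intro mult_right_mono) auto
      then have "thr - real s * gam / 2 \<le> - 2 * L" unfolding thr_def using sgam by (simp add: power2_eq_square)
      then show ?thesis unfolding rho_def by simp
    qed
    show "exp (- thr / 8) \<le> rho" unfolding rho_def thr_def by simp
  qed
  have main: "S.Lb K dl p T 1 \<le> measure_pmf.prob (rls_run n s ell h thr (Suc T)) S.Good" for T
  proof (rule S.run_bound)
    fix k assume k: "k < K"
    have "real k / real n \<le> real K / real n" using k by (intro divide_right_mono) auto
    moreover have "2 * rho \<le> 2 / real n" using rho_n by simp
    ultimately show "real k / real n + 2 * rho \<le> dl" unfolding dl_def by (simp add: add_divide_distrib)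
  next
    fix k assume k: "k < K"
    have kn: "real k / real n \<le> 1 / 28"
    proof -
      have "real k \<le> real n / 28" using k Kn28 by linarith
      then show ?thesis using n28 by (simp add: field_simps)
    qed
    have eq: "real (n - k) / real n = 1 - real k / real n" using k Kn n28 by (simp add: of_nat_diff field_simps)
    have q: "real (n - k) / (6 * real n) = (real (n - k) / real n) / 6"
      by (simp add: divide_divide_eq_left mult.commute)
    have e: "(1 - rho) * (real (n - k) / (6 * real n)) = (1 - rho) * (1 - real k / real n) / 6"
      unfolding q eq by simp
    define Y where "Y = (1 - rho) * (1 - real k / real n)"
    have "Y \<ge> (27/28) * (27/28)"
      unfolding Y_def using rho28 kn rho0 by (intro mult_mono) auto
    then have "1/7 \<le> Y / 6" by simp
    then show "p \<le> (1 - rho) * (real (n - k) / (6 * real n))" unfolding e p_def Y_def by simp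
  next
    show "K \<le> ell" using Kn ell by simp
    show "1 \<le> ell" using n1 ell by simp
  next
    fix k assume k: "K \<le> k"
    have "(2::real) ^ k \<ge> 2 ^ K" using k by (intro power_increasing) auto
    moreover have "(2::real) ^ K = 2 powr real K" by (rule powr_realpow[symmetric]) simp
    moreover have "2 powr real K \<ge> 2 powr ((c + 1) * L)" using K1(1) by (intro powr_mono) auto
    moreover have "(2::real) powr ((c + 1) * L) = real n powr (c + 1)" unfolding L_def by (rule two_powr_L[OF n1])
    ultimately have pk: "real n powr (c + 1) \<le> 2 ^ k" by linarith
    have npc: "real n powr (c + 1) = real n powr c * real n" using n1 by (simp add: powr_add)
    have pos: "0 < real n powr (c + 1)" using n1 by simp
    have ik: "1 / 2 ^ k \<le> 1 / real n powr (c + 1)" using pk pos by (intro divide_left_mono) auto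
    have "real s * (1 / 2 ^ k) \<le> (x + 1) * (1 / real n powr (c + 1))"
    proof (rule mult_mono[OF sx(2) ik])
      show "0 \<le> x + 1" using x0 by simp
      show "0 \<le> 1 / (2::real) ^ k" by simp
    qed
    also have "\<dots> = L\<^sup>2 / real n + 1 / real n powr (c + 1)"
      unfolding x_def npc using n1 nc1 by (simp add: field_simps)
    also have "\<dots> \<le> L + 1"
    proof -
      have "L\<^sup>2 / real n \<le> L"
      proof -
        have "L * L \<le> L * real n" using Ln L36 by (intro mult_left_mono) auto
        then show ?thesis using n1 by (simp add: power2_eq_square field_simps)
      qed
      moreover have "1 / real n powr (c + 1) \<le> 1"
      proof -
        have "1 \<le> real n powr (c + 1)" using n1 c by (simp add: ge_one_powr_ge_zero)
        then show ?thesis using divide_le_eq_1 by fastforce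
      qed
      ultimately show ?thesis by linarith
    qed
    also have "\<dots> \<le> thr / 4" unfolding thr_def using L36 by simp
    finally have A: "real s * (1 / 2 ^ k) \<le> thr / 4" .
    have "1 / 2 ^ k \<le> 1 / real n powr (c + 1)" by (rule ik)
    also have "\<dots> \<le> 1 / real n powr c"
    proof (rule divide_left_mono)
      show "real n powr c \<le> real n powr (c + 1)" using n1 by (intro powr_mono) auto
      show "0 < real n powr (c + 1) * real n powr c" using n1 by simp
    qed simp
    also have "\<dots> = gam" unfolding gam_def by (simp add: powr_minus inverse_eq_divide)
    finally show "real s * (1 / 2 ^ k) \<le> thr / 4 \<and> 1 / 2 ^ k \<le> gam" using A by simp
  next
    have "1 / real n \<le> (real K + 2) / real n" by (intro divide_right_mono) auto
    then show "rho \<le> dl" unfolding dl_def using rho_n by linarith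
    show "rho \<le> 1" using rho28 by simp
    show "0 \<le> p" "p \<le> 1" unfolding p_def by simp_all
    show "thr < real s"
    proof -
      have "16 * L < L * L" using L36 by (intro mult_strict_right_mono) auto
      then show ?thesis unfolding thr_def using L2x sx(1) by (simp add: power2_eq_square)
    qed
  qed
  define T where "T = nat \<lceil>10 * (c + 2) * L\<rceil> - 1"
  have y0: "0 \<le> 10 * (c + 2) * L" using c L36 by simp
  have yb: "10 * (c + 2) * L \<le> real (nat \<lceil>10 * (c + 2) * L\<rceil>)" "real (nat \<lceil>10 * (c + 2) * L\<rceil>) < 10 * (c + 2) * L + 1"
    using nat_ceil_bounds[OF y0] by auto
  have y1: "1 \<le> 10 * (c + 2) * L"
  proof -
    have "0 \<le> c * L" using c L36 by simp
    then show ?thesis using L36 by (simp add: algebra_simps)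
  qed
  have ny1: "1 \<le> nat \<lceil>10 * (c + 2) * L\<rceil>" using yb(1) y1 by linarith
  have TT: "Suc T = nat \<lceil>10 * (c + 2) * L\<rceil>" unfolding T_def using ny1 by simp
  have Tr: "real (Suc T) = real (nat \<lceil>10 * (c + 2) * L\<rceil>)" using TT by simp
  have Tb: "10 * (c + 2) * L - 1 \<le> real T" "real T \<le> 10 * (c + 2) * L"
  proof -
    have "real (Suc T) = real T + 1" by simp
    then show "10 * (c + 2) * L - 1 \<le> real T" "real T \<le> 10 * (c + 2) * L" using Tr yb by linarith+
  qed
  have r6: "2 ^ (K - 1) * (13/14::real) ^ T \<le> 3 / real n"
    by (rule R6[OF c n1 _ _ Kge1]) (use L36 K1(2) Tb(1) in \<open>auto simp: L_def\<close>)
  have tdl: "real T * dl \<le> 10 * (c + 2) * (c + 4) * L\<^sup>2 / real n"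
  proof -
    have "real K + 2 \<le> (c + 4) * L" using K1(2) L36 by (simp add: algebra_simps)
    then have "real T * (real K + 2) \<le> (10 * (c + 2) * L) * ((c + 4) * L)"
      using Tb(2) by (intro mult_mono) auto
    then have le: "real T * (real K + 2) / real n \<le> (10 * (c + 2) * L) * ((c + 4) * L) / real n"
      by (intro divide_right_mono) auto
    have eqp: "(10 * (c + 2) * L) * ((c + 4) * L) = 10 * (c + 2) * (c + 4) * L\<^sup>2"
      by (simp add: power2_eq_square algebra_simps)
    have "real T * dl = real T * (real K + 2) / real n" unfolding dl_def by simp
    also have "\<dots> \<le> (10 * (c + 2) * L) * ((c + 4) * L) / real n" by (rule le)
    also have "\<dots> = 10 * (c + 2) * (c + 4) * L\<^sup>2 / real n" unfolding eqp ..
    finally show ?thesis .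
  qed
  have Lform: "S.Lb K dl p T 1 = 1 - real T * dl - 2 ^ (K - 1) * (13/14) ^ T"
    unfolding S.Lb_def p_def by simp
  have "1 - (10 * (c + 2) * (c + 4) + 3) * L\<^sup>2 / real n \<le> S.Lb K dl p T 1"
  proof -
    have "3 / real n \<le> 3 * L\<^sup>2 / real n"
      using L36 n1 by (intro divide_right_mono) (auto simp: power2_eq_square intro: order_trans[of _ L])
    then have "(10 * (c + 2) * (c + 4) + 3) * L\<^sup>2 / real n \<ge> real T * dl + 2 ^ (K - 1) * (13/14) ^ T"
      using tdl r6 by (simp add: distrib_right add_divide_distrib)
    then show ?thesis unfolding Lform by linarith
  qed
  also have "\<dots> \<le> measure_pmf.prob (rls_run n s ell h thr (Suc T)) S.Good" by (rule main)
  finally have fin: "1 - (10 * (c + 2) * (c + 4) + 3) * L\<^sup>2 / real n \<le> measure_pmf.prob (rls_run n s ell h thr (Suc T)) S.Good" .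
  have G: "S.Good = {(X, d). d \<and> generr n h X \<le> gam}" by (rule S.Good_def)
  show ?thesis using fin unfolding G unfolding TT s_def thr_def gam_def L_def .
qed


theorem theorem8:
  fixes c :: real
  assumes "c > 0"
  shows "\<exists>c'>0. \<exists>C1 C2::real. \<exists>N::nat. \<forall>n\<ge>N. \<forall>ell\<ge>n. \<forall>h\<in>{ANDn n, ORn n}.
    measure_pmf.prob (rls_run n (ssize c n) ell h (c' * log 2 (real n)) (nat \<lceil>C1 * log 2 (real n)\<rceil>))
       {(X, d). d \<and> generr n h X \<le> real n powr (- c)}
    \<ge> 1 - C2 * (log 2 (real n))\<^sup>2 / real n"
proof -
  define N :: nat where "N = max (2 ^ 36) (nat \<lceil>(28 * (4 * c + 5))\<^sup>2\<rceil>)"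
  have "\<forall>n\<ge>N. \<forall>ell\<ge>n. \<forall>h\<in>{ANDn n, ORn n}.
    measure_pmf.prob (rls_run n (ssize c n) ell h (16 * log 2 (real n)) (nat \<lceil>10 * (c + 2) * log 2 (real n)\<rceil>))
       {(X, d). d \<and> generr n h X \<le> real n powr (- c)}
    \<ge> 1 - (10 * (c + 2) * (c + 4) + 3) * (log 2 (real n))\<^sup>2 / real n"
  proof (intro allI impI ballI)
    fix n ell :: nat and h assume nN: "N \<le> n" and ell: "n \<le> ell" and h: "h \<in> {ANDn n, ORn n}"
    have n36: "2 ^ 36 \<le> n" using nN unfolding N_def by simp
    have y0: "0 \<le> (28 * (4 * c + 5))\<^sup>2" by simp
    have "(28 * (4 * c + 5))\<^sup>2 \<le> real (nat \<lceil>(28 * (4 * c + 5))\<^sup>2\<rceil>)" by (rule nat_ceil_bounds(1)[OF y0])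
    also have "\<dots> \<le> real n"
    proof -
      have "nat \<lceil>(28 * (4 * c + 5))\<^sup>2\<rceil> \<le> n" using nN unfolding N_def by (rule max.boundedE)
      then show ?thesis by (rule of_nat_mono)
    qed
    finally have "(28 * (4 * c + 5))\<^sup>2 \<le> real n" .
    then have sq: "28 * (4 * c + 5) \<le> sqrt (real n)" by (rule real_le_rsqrt)
    obtain b where tg: "tgt b n h" using h tgt_AND tgt_OR by blast
    show "measure_pmf.prob (rls_run n (ssize c n) ell h (16 * log 2 (real n)) (nat \<lceil>10 * (c + 2) * log 2 (real n)\<rceil>))
       {(X, d). d \<and> generr n h X \<le> real n powr (- c)}
       \<ge> 1 - (10 * (c + 2) * (c + 4) + 3) * (log 2 (real n))\<^sup>2 / real n"
      using final_bound[OF assms n36 sq ell tg] by simp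
  qed
  then show ?thesis by (intro exI[of _ "16::real"] conjI exI[of _ "10 * (c + 2)"] exI[of _ "10 * (c + 2) * (c + 4) + 3"] exI[of _ N]) auto
qed

end
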